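(* Let $\alpha\in(0,1)\cup(1,\infty)$ and let $p_{X,Y}=p_Xp_{Y\mid X}$ be a joint distribution on finite alphabets $\mathcal X\times\mathcal Y$. Then $$I_\alpha^{\mathrm C}(X;Y)=\begin{cases}\min_{\tilde q_{Y\mid X}}\min_{q_Y}F_\alpha^{\mathrm C}(\tilde q_{Y\mid X},q_Y),&\alpha\in(0,1),\\[2pt] \max_{\tilde q_{Y\mid X}}\max_{r_{X\mid Y}}\tilde F_\alpha^{\mathrm C}(\tilde q_{Y\mid X},r_{X\mid Y}),&\alpha\in(1,\infty),\end{cases}$$ and, for all $\alpha\in(0,1)\cup(1,\infty)$, $$I_\alpha^{\mathrm C}(X;Y)=H(p_X)+\max_{r_{X\mid Y}}\frac{\alpha}{\alpha-1}\sum_x p_X(x)\log\sum_y p_{Y\mid X}(y\mid x)\,r_{X\mid Y}(x\mid y)^{1-\frac1\alpha},$$ where $$F_\alpha^{\mathrm C}(\tilde q_{Y\mid X},q_Y):=\frac{\alpha}{1-\alpha}D(p_X\tilde q_{Y\mid X}\|p_Xp_{Y\mid X})+D(p_X\tilde q_{Y\mid X}\|p_Xq_Y),$$ $$\tilde F_\alpha^{\mathrm C}(\tilde q_{Y\mid X},r_{X\mid Y}):=\frac{\alpha}{1-\alpha}D(p_X\tilde q_{Y\mid X}\|p_Xp_{Y\mid X})+\mathbb E^{p_X\tilde q_{Y\mid X}}\!\left[\log\frac{r_{X\mid Y}(X\mid Y)}{p_X(X)}\right].$$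
   Context: All alphabets are finite and $\log$ is natural. $H(p_X)=-\sum_xp_X(x)\log p_X(x)$ is the Shannon entropy and $D(p\|q)=\sum_zp(z)\log\frac{p(z)}{q(z)}$ the Kullback–Leibler divergence. The Rényi divergence of order $\alpha$ is $D_\alpha(p\|q):=\frac{1}{\alpha-1}\log\sum_zp(z)^\alpha q(z)^{1-\alpha}$, and the Augustin–Csiszár mutual information of order $\alpha$ is $I_\alpha^{\mathrm C}(X;Y):=\min_{q_Y}\sum_xp_X(x)D_\alpha(p_{Y\mid X}(\cdot\mid x)\|q_Y)$. Optimizations over $q_Y$ range over distributions on $\mathcal Y$, over $\tilde q_{Y\mid X}$ over all channels (families $\{\tilde q_{Y\mid X}(\cdot\mid x)\}_{x\in\mathcal X}$ of distributions on $\mathcal Y$), and over $r_{X\mid Y}$ over all reverse channels (families $\{r_{X\mid Y}(\cdot\mid y)\}_{y\in\mathcal Y}$ of distributions on $\mathcal X$). $p_X\tilde q_{Y\mid X}$ denotes the joint distribution $p_X(x)\tilde q_{Y\mid X}(y\mid x)$, and $p_Xq_Y$ the product distribution. *)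

theory Defs
  imports "HOL-Analysis.Analysis" "HOL-Library.Extended_Real"
begin

text \<open>All information quantities take values in the extended reals, with the
standard conventions 0 log 0 = 0, 0 log (0/q) = 0 and p log (p/0) = +infinity.\<close>

definition is_dist :: "('z::finite \<Rightarrow> real) \<Rightarrow> bool" where
  "is_dist p \<longleftrightarrow> (\<forall>z. 0 \<le> p z) \<and> (\<Sum>z\<in>UNIV. p z) = 1"

definition is_channel :: "('u::finite \<Rightarrow> 'v::finite \<Rightarrow> real) \<Rightarrow> bool" where
  "is_channel W \<longleftrightarrow> (\<forall>u. is_dist (W u))"

definition entropy :: "('z::finite \<Rightarrow> real) \<Rightarrow> real" where
  "entropy p = - (\<Sum>z\<in>UNIV. (if p z = 0 then 0 else p z * ln (p z)))"

definition KL :: "('z::finite \<Rightarrow> real) \<Rightarrow> ('z \<Rightarrow> real) \<Rightarrow> ereal" where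
  "KL p q = (\<Sum>z\<in>UNIV. (if p z = 0 then 0
                          else if q z = 0 then \<infinity>
                          else ereal (p z * ln (p z / q z))))"

text \<open>Renyi divergence of order alpha: (1/(alpha-1)) log sum p^alpha q^(1-alpha),
  with 0^(1-alpha) = +infinity for alpha > 1, and log 0 = -infinity, log infinity = infinity.\<close>
definition renyi_sum :: "real \<Rightarrow> ('z::finite \<Rightarrow> real) \<Rightarrow> ('z \<Rightarrow> real) \<Rightarrow> ereal" where
  "renyi_sum \<alpha> p q = (\<Sum>z\<in>UNIV. (if p z = 0 then 0
                          else if q z = 0 then (if \<alpha> > 1 then \<infinity> else 0)
                          else ereal (p z powr \<alpha> * q z powr (1 - \<alpha>))))"

definition eln :: "ereal \<Rightarrow> ereal" where
  "eln s = (if s = \<infinity> then \<infinity> else if s \<le> 0 then -\<infinity> else ereal (ln (real_of_ereal s)))"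

definition renyi_div :: "real \<Rightarrow> ('z::finite \<Rightarrow> real) \<Rightarrow> ('z \<Rightarrow> real) \<Rightarrow> ereal" where
  "renyi_div \<alpha> p q = ereal (1 / (\<alpha> - 1)) * eln (renyi_sum \<alpha> p q)"

definition I_C :: "real \<Rightarrow> ('a::finite \<Rightarrow> real) \<Rightarrow> ('a \<Rightarrow> 'b::finite \<Rightarrow> real) \<Rightarrow> ereal" where
  "I_C \<alpha> pX W = (INF q\<in>{q. is_dist q}. (\<Sum>x\<in>UNIV. ereal (pX x) * renyi_div \<alpha> (W x) q))"

definition joint :: "('a \<Rightarrow> real) \<Rightarrow> ('a \<Rightarrow> 'b \<Rightarrow> real) \<Rightarrow> ('a \<times> 'b \<Rightarrow> real)" where
  "joint pX V = (\<lambda>(x, y). pX x * V x y)"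

definition prodd :: "('a \<Rightarrow> real) \<Rightarrow> ('b \<Rightarrow> real) \<Rightarrow> ('a \<times> 'b \<Rightarrow> real)" where
  "prodd pX q = (\<lambda>(x, y). pX x * q y)"

definition F_C :: "real \<Rightarrow> ('a::finite \<Rightarrow> real) \<Rightarrow> ('a \<Rightarrow> 'b::finite \<Rightarrow> real)
    \<Rightarrow> ('a \<Rightarrow> 'b \<Rightarrow> real) \<Rightarrow> ('b \<Rightarrow> real) \<Rightarrow> ereal" where
  "F_C \<alpha> pX W V q = ereal (\<alpha> / (1 - \<alpha>)) * KL (joint pX V) (joint pX W) + KL (joint pX V) (prodd pX q)"

text \<open>Expectation under p_X V of log (r(X|Y) / p_X(X)); the reverse channel is
  r :: 'b => 'a => real with r y x = r(x|y).\<close>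
definition exp_log_ratio :: "('a::finite \<Rightarrow> real) \<Rightarrow> ('a \<Rightarrow> 'b::finite \<Rightarrow> real)
    \<Rightarrow> ('b \<Rightarrow> 'a \<Rightarrow> real) \<Rightarrow> ereal" where
  "exp_log_ratio pX V r = (\<Sum>(x, y)\<in>UNIV. (if pX x * V x y = 0 then 0
                            else if r y x = 0 then -\<infinity>
                            else ereal (pX x * V x y * ln (r y x / pX x))))"

definition F_C_tilde :: "real \<Rightarrow> ('a::finite \<Rightarrow> real) \<Rightarrow> ('a \<Rightarrow> 'b::finite \<Rightarrow> real)
    \<Rightarrow> ('a \<Rightarrow> 'b \<Rightarrow> real) \<Rightarrow> ('b \<Rightarrow> 'a \<Rightarrow> real) \<Rightarrow> ereal" where
  "F_C_tilde \<alpha> pX W V r = ereal (\<alpha> / (1 - \<alpha>)) * KL (joint pX V) (joint pX W) + exp_log_ratio pX V r"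

text \<open>The inner sum  sum_y p(y|x) r(x|y)^(1 - 1/alpha), with 0^(negative) = +infinity.\<close>
definition inner_sum :: "real \<Rightarrow> ('a \<Rightarrow> 'b::finite \<Rightarrow> real) \<Rightarrow> ('b \<Rightarrow> 'a \<Rightarrow> real) \<Rightarrow> 'a \<Rightarrow> ereal" where
  "inner_sum \<alpha> W r x = (\<Sum>y\<in>UNIV. (if W x y = 0 then 0
                          else if r y x = 0 then (if \<alpha> < 1 then \<infinity> else 0)
                          else ereal (W x y * r y x powr (1 - 1 / \<alpha>))))"

definition G_obj :: "real \<Rightarrow> ('a::finite \<Rightarrow> real) \<Rightarrow> ('a \<Rightarrow> 'b::finite \<Rightarrow> real)
    \<Rightarrow> ('b \<Rightarrow> 'a \<Rightarrow> real) \<Rightarrow> ereal" where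
  "G_obj \<alpha> pX W r = ereal (\<alpha> / (\<alpha> - 1)) *
      (\<Sum>x\<in>UNIV. ereal (pX x) * eln (inner_sum \<alpha> W r x))"

end

theory Submission
  imports Defs
begin


lemma gibbs_ineq:
  fixes v u :: "'c \<Rightarrow> real"
  assumes S: "finite S" and v0: "\<forall>y\<in>S. 0 \<le> v y" and v1: "sum v S = 1"
    and u0: "\<forall>y\<in>S. 0 \<le> u y" and uv: "\<forall>y\<in>S. v y > 0 \<longrightarrow> u y > 0"
  shows "(\<Sum>y\<in>S. if v y = 0 then 0 else v y * ln (u y / v y)) \<le> ln (sum u S)"
proof -
  obtain y0 where y0: "y0 \<in> S" "v y0 > 0"
  proof (rule ccontr)
    assume "\<not> thesis"
    then have "\<forall>y\<in>S. v y = 0" using v0 that by force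
    then have "sum v S = 0" by simp
    with v1 show False by simp
  qed
  define U where "U = sum u S"
  have "u y0 \<le> U" unfolding U_def using S y0 u0 by (intro member_le_sum) auto
  moreover have "u y0 > 0" using uv y0 by auto
  ultimately have U0: "U > 0" by linarith
  have tm: "(if v y = 0 then 0 else v y * ln (u y / v y)) \<le> u y / U - v y + v y * ln U"
    if y: "y \<in> S" for y
  proof (cases "v y = 0")
    case True
    then show ?thesis using u0 y U0 by simp
  next
    case False
    then have vp: "v y > 0" using v0 y by force
    then have up: "u y > 0" using uv y by auto
    have "ln (u y / v y) = ln (u y / (U * v y)) + ln U"
      using vp up U0 by (simp add: ln_div ln_mult)
    moreover have "ln (u y / (U * v y)) \<le> u y / (U * v y) - 1"
      using vp up U0 by (intro ln_le_minus_one) simp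
    ultimately have "v y * ln (u y / v y) \<le> v y * (u y / (U * v y) - 1) + v y * ln U"
      using vp by (simp add: distrib_left)
    also have "v y * (u y / (U * v y) - 1) = u y / U - v y"
      using vp U0 by (simp add: field_simps)
    finally show ?thesis using False by simp
  qed
  have "(\<Sum>y\<in>S. if v y = 0 then 0 else v y * ln (u y / v y)) \<le> (\<Sum>y\<in>S. u y / U - v y + v y * ln U)"
    by (rule sum_mono) (use tm in auto)
  also have "\<dots> = sum u S / U - sum v S + sum v S * ln U"
    by (simp add: sum.distrib sum_subtractf sum_divide_distrib sum_distrib_right)
  also have "\<dots> = ln U" using v1 U0 U_def by simp
  finally show ?thesis unfolding U_def .
qed

lemma holder_ineq:
  fixes a b :: "'c \<Rightarrow> real"
  assumes S: "finite S" and th: "0 < \<theta>" "\<theta> < 1"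
    and a0: "\<forall>y\<in>S. 0 \<le> a y" and b0: "\<forall>y\<in>S. 0 \<le> b y"
  shows "(\<Sum>y\<in>S. a y powr \<theta> * b y powr (1 - \<theta>)) \<le> (sum a S) powr \<theta> * (sum b S) powr (1 - \<theta>)"
proof -
  define SA where "SA = sum a S"
  define SB where "SB = sum b S"
  have SA0: "SA \<ge> 0" unfolding SA_def using a0 by (simp add: sum_nonneg)
  have SB0: "SB \<ge> 0" unfolding SB_def using b0 by (simp add: sum_nonneg)
  show ?thesis
  proof (cases "SA = 0 \<or> SB = 0")
    case True
    then have "\<forall>y\<in>S. a y = 0 \<or> b y = 0"
      using sum_nonneg_eq_0_iff[OF S] a0 b0 unfolding SA_def SB_def by blast
    then have "(\<Sum>y\<in>S. a y powr \<theta> * b y powr (1 - \<theta>)) = 0"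
      by (intro sum.neutral) auto
    then show ?thesis by simp
  next
    case False
    then have SAp: "SA > 0" and SBp: "SB > 0" using SA0 SB0 by auto
    have tm: "a y powr \<theta> * b y powr (1 - \<theta>) \<le> SA powr \<theta> * SB powr (1 - \<theta>) * (\<theta> * (a y / SA) + (1 - \<theta>) * (b y / SB))"
      if y: "y \<in> S" for y
    proof (cases "a y = 0 \<or> b y = 0")
      case True
      have "0 \<le> SA powr \<theta> * SB powr (1 - \<theta>) * (\<theta> * (a y / SA) + (1 - \<theta>) * (b y / SB))"
        using a0 b0 y th SAp SBp by (intro mult_nonneg_nonneg add_nonneg_nonneg) auto
      then show ?thesis using True by auto
    next
      case False
      then have ap: "a y > 0" and bp: "b y > 0" using a0 b0 y by force+
      have "(a y / SA) powr \<theta> * (b y / SB) powr (1 - \<theta>) \<le> \<theta> * (a y / SA) + (1 - \<theta>) * (b y / SB)"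
        using ap bp SAp SBp th by (intro Youngs_inequality_0) auto
      moreover have "a y powr \<theta> * b y powr (1 - \<theta>) = SA powr \<theta> * SB powr (1 - \<theta>) * ((a y / SA) powr \<theta> * (b y / SB) powr (1 - \<theta>))"
        using ap bp SAp SBp by (simp add: powr_divide field_simps)
      moreover have "SA powr \<theta> * SB powr (1 - \<theta>) > 0" using SAp SBp by simp
      ultimately show ?thesis by (metis mult_le_cancel_left_pos)
    qed
    have "(\<Sum>y\<in>S. a y powr \<theta> * b y powr (1 - \<theta>)) \<le> (\<Sum>y\<in>S. SA powr \<theta> * SB powr (1 - \<theta>) * (\<theta> * (a y / SA) + (1 - \<theta>) * (b y / SB)))"
      by (rule sum_mono) (use tm in auto)
    also have "\<dots> = SA powr \<theta> * SB powr (1 - \<theta>) * (\<theta> * (SA / SA) + (1 - \<theta>) * (SB / SB))"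
      unfolding SA_def SB_def
      by (simp add: sum_distrib_left sum.distrib sum_divide_distrib[symmetric] flip: sum_distrib_left)
    also have "\<dots> = SA powr \<theta> * SB powr (1 - \<theta>)" using SAp SBp by simp
    finally show ?thesis unfolding SA_def SB_def .
  qed
qed

lemma compact_simplex_lo:
  fixes lo :: "'b::finite \<Rightarrow> real"
  assumes lo: "\<forall>i. 0 \<le> lo i"
  shows "compact {v::real^'b. (\<forall>i. lo i \<le> v$i) \<and> (\<Sum>i\<in>UNIV. v$i) = 1}"
proof -
  let ?S = "{v::real^'b. (\<forall>i. lo i \<le> v$i) \<and> (\<Sum>i\<in>UNIV. v$i) = 1}"
  have "?S \<subseteq> cbox 0 1"
  proof
    fix v assume v: "v \<in> ?S"
    have "\<forall>i. 0 \<le> v$i \<and> v$i \<le> 1"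
    proof
      fix i
      have nn: "\<forall>j. 0 \<le> v$j"
      proof
        fix j
        have "lo j \<le> v$j" using v by simp
        then show "0 \<le> v$j" using lo[rule_format, of j] by linarith
      qed
      have "v$i \<le> (\<Sum>j\<in>UNIV. v$j)" by (rule member_le_sum) (use nn in auto)
      then show "0 \<le> v$i \<and> v$i \<le> 1" using v nn by auto
    qed
    then show "v \<in> cbox 0 1" by (simp add: mem_box_cart)
  qed
  then have bS: "bounded ?S" by (rule bounded_subset[OF bounded_cbox])
  have eq: "?S = (\<Inter>i. {v. lo i \<le> v$i}) \<inter> {v. (\<Sum>i\<in>UNIV. v$i) = 1}" by auto
  have c1: "closed (\<Inter>i. {v::real^'b. lo i \<le> v$i})"
  proof (rule closed_INT, rule ballI)
    fix i :: 'b
    show "closed {v::real^'b. lo i \<le> v$i}"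
      by (rule closed_Collect_le[OF continuous_on_const continuous_on_component[OF continuous_on_id]])
  qed
  have c2: "closed {v::real^'b. (\<Sum>i\<in>UNIV. v$i) = 1}"
    by (rule closed_Collect_eq[OF continuous_on_sum[OF continuous_on_component[OF continuous_on_id]] continuous_on_const])
  have "closed ?S" unfolding eq by (rule closed_Int[OF c1 c2])
  then show ?thesis by (simp add: compact_eq_bounded_closed bS)
qed

locale ac =
  fixes \<alpha> :: real and p :: "'a::finite \<Rightarrow> real" and W :: "'a \<Rightarrow> 'b::finite \<Rightarrow> real"
  assumes a0: "0 < \<alpha>" and a1: "\<alpha> \<noteq> 1" and pd: "is_dist p" and Wc: "is_channel W"
begin

lemma p_nn: "0 \<le> p x" using pd unfolding is_dist_def by auto
lemma p_sum: "(\<Sum>x\<in>UNIV. p x) = 1" using pd unfolding is_dist_def by auto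
lemma W_nn: "0 \<le> W x y" using Wc unfolding is_channel_def is_dist_def by auto
lemma W_sum: "(\<Sum>y\<in>UNIV. W x y) = 1" using Wc unfolding is_channel_def is_dist_def by auto
lemma W_ex: "\<exists>y. W x y > 0"
proof (rule ccontr)
  assume "\<not> ?thesis"
  then have "\<forall>y. W x y = 0" using W_nn by (metis less_eq_real_def)
  then show False using W_sum[of x] by simp
qed

definition A :: "('b \<Rightarrow> real) \<Rightarrow> 'a \<Rightarrow> real" where
  "A q x = (\<Sum>y\<in>UNIV. W x y powr \<alpha> * q y powr (1 - \<alpha>))"

definition goodx :: "('b \<Rightarrow> real) \<Rightarrow> 'a \<Rightarrow> bool" where
  "goodx q x \<longleftrightarrow> A q x > 0 \<and> (\<alpha> > 1 \<longrightarrow> (\<forall>y. W x y > 0 \<longrightarrow> q y > 0))"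

definition good :: "('b \<Rightarrow> real) \<Rightarrow> bool" where
  "good q \<longleftrightarrow> is_dist q \<and> (\<forall>x. p x > 0 \<longrightarrow> goodx q x)"

definition phi :: "('b \<Rightarrow> real) \<Rightarrow> real" where
  "phi q = (\<Sum>x\<in>UNIV. p x * ln (A q x)) / (\<alpha> - 1)"

definition f :: "('b \<Rightarrow> real) \<Rightarrow> ereal" where
  "f q = (\<Sum>x\<in>UNIV. ereal (p x) * renyi_div \<alpha> (W x) q)"

lemma A_nn: "is_dist q \<Longrightarrow> 0 \<le> A q x"
  unfolding A_def by (intro sum_nonneg) simp

lemma renyi_sum_fin:
  assumes "\<alpha> > 1 \<longrightarrow> (\<forall>y. W x y > 0 \<longrightarrow> q y > 0)" "is_dist q"
  shows "renyi_sum \<alpha> (W x) q = ereal (A q x)"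
proof -
  have "renyi_sum \<alpha> (W x) q = (\<Sum>y\<in>UNIV. ereal (W x y powr \<alpha> * q y powr (1 - \<alpha>)))"
    unfolding renyi_sum_def
  proof (intro sum.cong refl)
    fix y
    have qn: "q y \<ge> 0" using assms(2) unfolding is_dist_def by auto
    have wn: "W x y \<ge> 0" by (rule W_nn)
    show "(if W x y = 0 then 0 else if q y = 0 then if 1 < \<alpha> then \<infinity> else 0
          else ereal (W x y powr \<alpha> * q y powr (1 - \<alpha>))) = ereal (W x y powr \<alpha> * q y powr (1 - \<alpha>))"
      using assms(1) qn wn by (auto simp: less_eq_real_def)
  qed
  then show ?thesis unfolding A_def by simp
qed

lemma renyi_div_good:
  assumes "goodx q x" "is_dist q"
  shows "renyi_div \<alpha> (W x) q = ereal (ln (A q x) / (\<alpha> - 1))"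
  using assms renyi_sum_fin[of x q] unfolding goodx_def renyi_div_def eln_def by auto

lemma renyi_div_bad:
  assumes "\<not> goodx q x" "is_dist q"
  shows "renyi_div \<alpha> (W x) q = \<infinity>"
proof (cases "\<alpha> > 1 \<longrightarrow> (\<forall>y. W x y > 0 \<longrightarrow> q y > 0)")
  case True
  then have "A q x \<le> 0" using assms unfolding goodx_def by auto
  then have A0: "A q x = 0" using A_nn[OF assms(2), of x] by simp
  have "\<alpha> < 1"
  proof (rule ccontr)
    assume "\<not> \<alpha> < 1"
    then have ag: "\<alpha> > 1" using a1 by simp
    obtain y where y: "W x y > 0" using W_ex by blast
    then have qy: "q y > 0" using True ag by auto
    have "W x y powr \<alpha> * q y powr (1 - \<alpha>) \<le> A q x"
      unfolding A_def using assms(2) by (intro member_le_sum) auto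
    moreover have "W x y powr \<alpha> * q y powr (1 - \<alpha>) > 0" using y qy by simp
    ultimately show False using A0 by simp
  qed
  then show ?thesis using renyi_sum_fin[OF True assms(2)] A0
    unfolding renyi_div_def eln_def by simp
next
  case False
  then obtain y where ag: "\<alpha> > 1" and y: "W x y > 0" "\<not> q y > 0" by auto
  then have "q y = 0" using assms(2) unfolding is_dist_def by (metis less_eq_real_def)
  then have "renyi_sum \<alpha> (W x) q = \<infinity>"
    unfolding renyi_sum_def sum_Pinfty using y ag by (intro conjI bexI[of _ y]) auto
  then show ?thesis unfolding renyi_div_def eln_def using ag by simp
qed

lemma f_good: assumes "good q" shows "f q = ereal (phi q)"
proof -
  have "f q = (\<Sum>x\<in>UNIV. ereal (p x * (ln (A q x) / (\<alpha> - 1))))"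
    unfolding f_def
  proof (intro sum.cong refl)
    fix x
    show "ereal (p x) * renyi_div \<alpha> (W x) q = ereal (p x * (ln (A q x) / (\<alpha> - 1)))"
    proof (cases "p x > 0")
      case True
      then show ?thesis using assms renyi_div_good[of q x] unfolding good_def by simp
    next
      case False
      then have "p x = 0" using p_nn[of x] by simp
      then show ?thesis by (simp add: zero_ereal_def[symmetric])
    qed
  qed
  also have "\<dots> = ereal (phi q)" unfolding phi_def by (simp add: sum_divide_distrib)
  finally show ?thesis .
qed

lemma f_bad: assumes "is_dist q" "\<not> good q" shows "f q = \<infinity>"
proof -
  obtain x where x: "p x > 0" "\<not> goodx q x" using assms unfolding good_def by auto
  have "ereal (p x) * renyi_div \<alpha> (W x) q = \<infinity>" using renyi_div_bad[OF x(2) assms(1)] x(1) by simp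
  then show ?thesis unfolding f_def sum_Pinfty by auto
qed


definition vf :: "real^'b \<Rightarrow> ('b \<Rightarrow> real)" where "vf v = (\<lambda>y. v$y)"

lemma vf_vec: "vf (\<chi> y. q y) = q" unfolding vf_def by (rule ext) simp

lemma unif_dist: "is_dist (\<lambda>y::'b. 1 / real CARD('b))"
  unfolding is_dist_def by simp

lemma A_pos_of_pos:
  assumes "\<forall>y. W x y > 0 \<longrightarrow> q y > 0" "is_dist q"
  shows "A q x > 0"
proof -
  obtain y where y: "W x y > 0" using W_ex by blast
  have "W x y powr \<alpha> * q y powr (1 - \<alpha>) \<le> A q x"
    unfolding A_def using assms(2) by (intro member_le_sum) auto
  moreover have "q y > 0" using y assms by auto
  then have "W x y powr \<alpha> * q y powr (1 - \<alpha>) > 0" using y by simp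
  ultimately show ?thesis by simp
qed

lemma unif_good: "good (\<lambda>y::'b. 1 / real CARD('b))"
  unfolding good_def goodx_def using unif_dist A_pos_of_pos[OF _ unif_dist] by simp

lemma exists_min_lt1:
  assumes al: "\<alpha> < 1"
  shows "\<exists>q. good q \<and> (\<forall>q'. good q' \<longrightarrow> phi q \<le> phi q')"
proof -
  define K where "K = {v::real^'b. (\<forall>i. (0::real) \<le> v$i) \<and> (\<Sum>i\<in>UNIV. v$i) = 1}"
  have cK: "compact K" unfolding K_def using compact_simplex_lo[of "\<lambda>_. 0"] by simp
  define Px where "Px = {x. 0 < p x}"
  define psi where "psi v = (\<Prod>x\<in>Px. A (vf v) x powr p x)" for v
  have vK: "is_dist (vf v)" if "v \<in> K" for v using that unfolding K_def is_dist_def vf_def by auto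
  have Kq: "(\<chi> y. q y) \<in> K" if "is_dist q" for q using that unfolding K_def is_dist_def by auto
  have cont: "continuous_on K psi"
    unfolding psi_def
  proof (intro continuous_on_prod ballI)
    fix x assume x: "x \<in> Px"
    have cA: "continuous_on K (\<lambda>v. A (vf v) x)"
      unfolding A_def vf_def
    proof (intro continuous_on_sum)
      fix y
      have "continuous_on K (\<lambda>v. v $ y powr (1 - \<alpha>))"
      proof (rule continuous_on_powr')
        show "continuous_on K (\<lambda>v. v $ y)" by (intro continuous_on_component continuous_on_id)
        show "continuous_on K (\<lambda>v. 1 - \<alpha>)" by (rule continuous_on_const)
        show "\<forall>v\<in>K. 0 \<le> v $ y \<and> (v $ y = 0 \<longrightarrow> 0 < 1 - \<alpha>)" using al by (simp add: K_def)
      qed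
      then show "continuous_on K (\<lambda>v. W x y powr \<alpha> * v $ y powr (1 - \<alpha>))"
        by (intro continuous_on_mult continuous_on_const)
    qed
    show "continuous_on K (\<lambda>v. A (vf v) x powr p x)"
    proof (rule continuous_on_powr')
      show "continuous_on K (\<lambda>v. A (vf v) x)" by (rule cA)
      show "continuous_on K (\<lambda>v. p x)" by (rule continuous_on_const)
      show "\<forall>v\<in>K. 0 \<le> A (vf v) x \<and> (A (vf v) x = 0 \<longrightarrow> 0 < p x)"
        using x vK A_nn by (simp add: Px_def)
    qed
  qed
  obtain v0 where v0: "v0 \<in> K" "\<forall>v\<in>K. psi v \<le> psi v0"
    using continuous_attains_sup[OF cK _ cont] Kq[OF unif_dist] by blast
  define q0 where "q0 = vf v0"
  have q0d: "is_dist q0" using vK v0 q0_def by simp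
  have lnpsi: "ln (psi (\<chi> y. q y)) = (\<Sum>x\<in>UNIV. p x * ln (A q x))" if "good q" for q
  proof -
    have pos: "\<forall>x\<in>Px. A q x > 0" using that unfolding good_def goodx_def Px_def by auto
    have "ln (psi (\<chi> y. q y)) = (\<Sum>x\<in>Px. ln (A q x powr p x))"
      unfolding psi_def vf_vec using pos by (intro ln_prod) auto
    also have "\<dots> = (\<Sum>x\<in>Px. p x * ln (A q x))" using pos by (intro sum.cong) auto
    also have "\<dots> = (\<Sum>x\<in>UNIV. p x * ln (A q x))"
      by (intro sum.mono_neutral_left) (use p_nn in \<open>auto simp: Px_def less_eq_real_def\<close>)
    finally show ?thesis .
  qed
  have psipos: "psi (\<chi> y. q y) > 0" if "good q" for q
  proof -
    have "\<forall>x\<in>Px. A q x powr p x > 0" using that unfolding good_def goodx_def Px_def by fastforce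
    then show ?thesis unfolding psi_def vf_vec by (simp add: prod_pos)
  qed
  have "psi v0 > 0" using v0(2) Kq[OF unif_dist] psipos[OF unif_good] by force
  then have g0: "good q0"
  proof -
    assume ps: "psi v0 > 0"
    have "\<forall>x. p x > 0 \<longrightarrow> A q0 x > 0"
    proof (intro allI impI, rule ccontr)
      fix x assume x: "p x > 0" "\<not> A q0 x > 0"
      then have "A q0 x = 0" using A_nn[OF q0d, of x] by linarith
      then have "psi v0 = 0" unfolding psi_def q0_def[symmetric] using x
        by (intro prod_zero) (auto simp: Px_def intro!: bexI[of _ x])
      then show False using ps by simp
    qed
    then show ?thesis unfolding good_def goodx_def using q0d al by auto
  qed
  have "phi q0 \<le> phi q" if "good q" for q
  proof -
    have "psi (\<chi> y. q y) \<le> psi v0" using v0(2) Kq that unfolding good_def by blast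
    then have "ln (psi (\<chi> y. q y)) \<le> ln (psi (\<chi> y. q0 y))"
      using psipos[OF that] unfolding q0_def vf_def by simp
    then have "(\<Sum>x\<in>UNIV. p x * ln (A q x)) \<le> (\<Sum>x\<in>UNIV. p x * ln (A q0 x))"
      using lnpsi[OF that] lnpsi[OF g0] by simp
    then show ?thesis unfolding phi_def using al by (simp add: divide_right_mono_neg)
  qed
  then show ?thesis using g0 by blast
qed

end

context ac begin

lemma exists_min_gt1:
  assumes ag: "\<alpha> > 1"
  shows "\<exists>q. good q \<and> (\<forall>q'. good q' \<longrightarrow> phi q \<le> phi q')"
proof -
  define Px where "Px = {x. 0 < p x}"
  define Yp where "Yp = {y. \<exists>x. 0 < p x \<and> 0 < W x y}"
  define n where "n = real CARD('b)"
  have n0: "n \<ge> 1" unfolding n_def by (simp add: Suc_leI)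
  define u where "u = (\<lambda>y::'b. 1 / n)"
  have ug: "good u" unfolding u_def n_def by (rule unif_good)
  obtain x1 where x1: "p x1 > 0"
  proof (rule ccontr)
    assume "\<not> thesis"
    then have "\<forall>x. p x = 0" using p_nn that by (metis less_eq_real_def)
    then show False using p_sum by simp
  qed
  obtain y1 where y1: "W x1 y1 > 0" using W_ex by blast
  define MS where "MS = (\<lambda>(x,y). W x y powr \<alpha>) ` {(x,y). 0 < p x \<and> 0 < W x y}"
  define m where "m = Min MS"
  have MSf: "finite MS" unfolding MS_def by simp
  have MSne: "MS \<noteq> {}" unfolding MS_def using x1 y1 by auto
  have m0: "m > 0" unfolding m_def using MSf MSne by (auto simp: Min_gr_iff MS_def)
  have mle: "m \<le> W x y powr \<alpha>" if "p x > 0" "W x y > 0" for x y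
    unfolding m_def using MSf that by (intro Min_le) (auto simp: MS_def)
  define pm where "pm = Min (p ` Px)"
  have pm0: "pm > 0" unfolding pm_def using x1 by (subst Min_gr_iff) (auto simp: Px_def)
  have pmle: "pm \<le> p x" if "p x > 0" for x unfolding pm_def using that by (intro Min_le) (auto simp: Px_def)
  define c where "c = (ln m / (\<alpha> - 1) - phi u) / pm"
  define \<delta> where "\<delta> = min (1 / n) (exp (c - 1))"
  have d0: "\<delta> > 0" unfolding \<delta>_def using n0 by simp
  have d1: "\<delta> \<le> 1 / n" unfolding \<delta>_def by simp
  have "1 / n \<le> 1" using n0 by simp
  then have d1': "\<delta> \<le> 1" using d1 by linarith
  have "\<delta> \<le> exp (c - 1)" unfolding \<delta>_def by simp
  then have "ln \<delta> \<le> ln (exp (c - 1))" using d0 by (subst ln_le_cancel_iff) auto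
  then have dc: "ln \<delta> \<le> c - 1" by simp
  define lo where "lo = (\<lambda>i. if i \<in> Yp then \<delta> else 0)"
  define K where "K = {v::real^'b. (\<forall>i. lo i \<le> v$i) \<and> (\<Sum>i\<in>UNIV. v$i) = 1}"
  have lo0: "\<forall>i. 0 \<le> lo i" unfolding lo_def using d0 by simp
  have cK: "compact K" unfolding K_def by (rule compact_simplex_lo[OF lo0])
  have vnn: "0 \<le> v$i" if "v \<in> K" for v i
  proof -
    have "lo i \<le> v$i" using that unfolding K_def by simp
    then show ?thesis using lo0[rule_format, of i] by linarith
  qed
  have vK: "is_dist (vf v)" if "v \<in> K" for v using that vnn unfolding K_def is_dist_def vf_def by auto
  have Kq: "(\<chi> y. q y) \<in> K \<longleftrightarrow> is_dist q \<and> (\<forall>y\<in>Yp. \<delta> \<le> q y)" for q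
    unfolding K_def is_dist_def lo_def using d0 by auto
  have uK: "(\<chi> y. u y) \<in> K" unfolding Kq using ug d1 unfolding good_def u_def by auto
  have vgood: "good (vf v)" if "v \<in> K" for v
  proof -
    have "\<forall>x y. 0 < p x \<longrightarrow> 0 < W x y \<longrightarrow> 0 < vf v y"
    proof (intro allI impI)
      fix x y assume "0 < p x" "0 < W x y"
      then have yY: "y \<in> Yp" unfolding Yp_def by auto
      have "lo y \<le> v$y" using that unfolding K_def by simp
      then have "\<delta> \<le> v$y" using yY unfolding lo_def by simp
      then show "0 < vf v y" using d0 unfolding vf_def by simp
    qed
    then show ?thesis unfolding good_def goodx_def using vK[OF that] A_pos_of_pos[OF _ vK[OF that]] by blast
  qed
  have cont: "continuous_on K (\<lambda>v. phi (vf v))"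
    unfolding phi_def
  proof (intro continuous_on_divide continuous_on_const continuous_on_sum)
    fix x
    show "continuous_on K (\<lambda>v. p x * ln (A (vf v) x))"
    proof (cases "p x > 0")
      case False
      then have "p x = 0" using p_nn[of x] by simp
      then show ?thesis by (simp add: continuous_on_const)
    next
      case True
      have cA: "continuous_on K (\<lambda>v. A (vf v) x)"
        unfolding A_def vf_def
      proof (intro continuous_on_sum)
        fix y
        show "continuous_on K (\<lambda>v. W x y powr \<alpha> * v $ y powr (1 - \<alpha>))"
        proof (cases "W x y > 0")
          case False
          then have "W x y = 0" using W_nn[of x y] by simp
          then show ?thesis by (simp add: continuous_on_const)
        next
          case Wp: True
          then have "y \<in> Yp" using True unfolding Yp_def by auto
          have pos: "\<forall>v\<in>K. v$y \<noteq> 0"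
          proof
            fix v assume "v \<in> K"
            then have "lo y \<le> v$y" unfolding K_def by simp
            then show "v$y \<noteq> 0" using \<open>y \<in> Yp\<close> d0 unfolding lo_def by simp
          qed
          have "continuous_on K (\<lambda>v. v $ y powr (1 - \<alpha>))"
            by (rule continuous_on_powr[OF continuous_on_component[OF continuous_on_id] continuous_on_const pos])
          then show ?thesis by (intro continuous_on_mult continuous_on_const)
        qed
      qed
      have "\<forall>v\<in>K. A (vf v) x \<noteq> 0" using vgood True unfolding good_def goodx_def by force
      then show ?thesis by (intro continuous_on_mult continuous_on_const continuous_on_ln cA)
    qed
  qed (use ag in simp)
  obtain v0 where v0: "v0 \<in> K" "\<forall>v\<in>K. phi (vf v0) \<le> phi (vf v)"
    using continuous_attains_inf[OF cK _ cont] uK by blast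
  define q0 where "q0 = vf v0"
  have g0: "good q0" unfolding q0_def by (rule vgood[OF v0(1)])
  have q0u: "phi q0 \<le> phi u" using v0(2) uK unfolding q0_def by (metis vf_vec)
  have "phi q0 \<le> phi q" if gq: "good q" for q
  proof (cases "\<forall>y\<in>Yp. \<delta> \<le> q y")
    case True
    then have "(\<chi> y. q y) \<in> K" using Kq gq unfolding good_def by blast
    then show ?thesis using v0(2) unfolding q0_def by (metis vf_vec)
  next
    case False
    then obtain y0 where y0: "y0 \<in> Yp" "q y0 < \<delta>" by auto
    then obtain x0 where x0: "p x0 > 0" "W x0 y0 > 0" unfolding Yp_def by auto
    have qd: "is_dist q" using gq unfolding good_def by simp
    have qle1: "q y \<le> 1" for y
    proof -
      have "q y \<le> (\<Sum>y\<in>UNIV. q y)" using qd unfolding is_dist_def by (intro member_le_sum) auto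
      then show ?thesis using qd unfolding is_dist_def by simp
    qed
    have qpos: "q y > 0" if "p x > 0" "W x y > 0" for x y
      using gq that ag unfolding good_def goodx_def by auto
    have Ale: "W x y powr \<alpha> * q y powr (1 - \<alpha>) \<le> A q x" for x y
      unfolding A_def using qd unfolding is_dist_def by (intro member_le_sum) auto
    have Am: "m \<le> A q x" if "p x > 0" for x
    proof -
      obtain y where y: "W x y > 0" using W_ex by blast
      have qy: "q y > 0" using qpos that y by blast
      have "1 \<le> q y powr (1 - \<alpha>)"
      proof -
        have "0 \<le> (1 - \<alpha>) * ln (q y)" using ag qy qle1[of y] by (intro mult_nonpos_nonpos) auto
        then show ?thesis unfolding powr_def using qy by simp
      qed
      then have "m * 1 \<le> W x y powr \<alpha> * q y powr (1 - \<alpha>)"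
        using mle[OF that y] m0 by (intro mult_mono) auto
      then show ?thesis using Ale[of x y] by simp
    qed
    have Am0: "m * \<delta> powr (1 - \<alpha>) \<le> A q x0"
    proof -
      have qy: "q y0 > 0" using qpos x0 by blast
      have "\<delta> powr (1 - \<alpha>) < q y0 powr (1 - \<alpha>)"
        using ag qy y0(2) by (intro powr_less_mono2_neg) auto
      then have "m * \<delta> powr (1 - \<alpha>) \<le> W x0 y0 powr \<alpha> * q y0 powr (1 - \<alpha>)"
        using mle[OF x0] m0 by (intro mult_mono) auto
      then show ?thesis using Ale[of x0 y0] by simp
    qed
    have sumge: "(\<Sum>x\<in>UNIV. p x * ln (A q x)) \<ge> (\<Sum>x\<in>UNIV. p x * ln m + (if x = x0 then p x0 * ((1 - \<alpha>) * ln \<delta>) else 0))"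
    proof (intro sum_mono)
      fix x
      show "p x * ln m + (if x = x0 then p x0 * ((1 - \<alpha>) * ln \<delta>) else 0) \<le> p x * ln (A q x)"
      proof (cases "p x > 0")
        case False
        then have "p x = 0" using p_nn[of x] by simp
        then show ?thesis using x0 by auto
      next
        case True
        show ?thesis
        proof (cases "x = x0")
          case True
          have "ln (m * \<delta> powr (1 - \<alpha>)) \<le> ln (A q x0)"
            using Am0 m0 d0 by (subst ln_le_cancel_iff) (auto intro: less_le_trans[OF _ Am0])
          then have "ln m + (1 - \<alpha>) * ln \<delta> \<le> ln (A q x0)" using m0 d0 by (simp add: ln_mult)
          then have "p x0 * (ln m + (1 - \<alpha>) * ln \<delta>) \<le> p x0 * ln (A q x0)"
            using x0 by (intro mult_left_mono) auto
          then show ?thesis using True by (simp add: distrib_left)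
        next
          case False
          have "ln m \<le> ln (A q x)" using Am[OF \<open>p x > 0\<close>] m0 by simp
          then show ?thesis using False \<open>p x > 0\<close> by (simp add: mult_left_mono)
        qed
      qed
    qed
    also have "(\<Sum>x\<in>UNIV. p x * ln m + (if x = x0 then p x0 * ((1 - \<alpha>) * ln \<delta>) else 0))
        = ln m + p x0 * ((1 - \<alpha>) * ln \<delta>)"
      by (simp add: sum.distrib flip: sum_distrib_right add: p_sum)
    finally have s1: "ln m + p x0 * ((1 - \<alpha>) * ln \<delta>) \<le> (\<Sum>x\<in>UNIV. p x * ln (A q x))" .
    have lnd: "ln \<delta> \<le> 0" using d0 d1' by simp
    have "pm * ((1 - \<alpha>) * ln \<delta>) \<le> p x0 * ((1 - \<alpha>) * ln \<delta>)"
      using pmle[OF x0(1)] ag lnd by (intro mult_right_mono) (auto intro: mult_nonpos_nonpos)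
    with s1 have s2: "ln m + pm * ((1 - \<alpha>) * ln \<delta>) \<le> (\<Sum>x\<in>UNIV. p x * ln (A q x))" by simp
    have "phi q \<ge> (ln m + pm * ((1 - \<alpha>) * ln \<delta>)) / (\<alpha> - 1)"
      unfolding phi_def using s2 ag by (intro divide_right_mono) auto
    also have "(ln m + pm * ((1 - \<alpha>) * ln \<delta>)) / (\<alpha> - 1) = ln m / (\<alpha> - 1) - pm * ln \<delta>"
      using ag by (simp add: field_simps)
    finally have "phi q \<ge> ln m / (\<alpha> - 1) - pm * ln \<delta>" .
    moreover have "pm * ln \<delta> \<le> pm * (c - 1)" using dc pm0 by simp
    moreover have "pm * c = ln m / (\<alpha> - 1) - phi u" unfolding c_def using pm0 by simp
    ultimately have "phi q \<ge> phi u + pm" by (simp add: algebra_simps)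
    then show ?thesis using q0u pm0 by simp
  qed
  then show ?thesis using g0 by blast
qed

end



lemma tan_neg:
  fixes a b g :: real
  assumes g: "g \<le> 0" and a: "a > 0" and b: "b > 0"
  shows "b powr g - a powr g \<le> g * b powr (g - 1) * (b - a)"
proof -
  have "1 + g * ln (a / b) \<le> exp (g * ln (a / b))" by (rule exp_ge_add_one_self)
  moreover have "g * (a / b - 1) \<le> g * ln (a / b)"
    using g a b ln_le_minus_one[of "a/b"] by (intro mult_left_mono_neg) auto
  ultimately have "1 + g * (a / b - 1) \<le> exp (g * ln (a / b))" by linarith
  then have "1 + g * (a / b - 1) \<le> (a / b) powr g"
    using a b by (simp add: powr_def)
  then have "b powr g * (1 + g * (a / b - 1)) \<le> b powr g * (a / b) powr g"
    using b by (intro mult_left_mono) auto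
  also have "b powr g * (a / b) powr g = a powr g" using a b by (simp add: powr_divide)
  also have "b powr g * (1 + g * (a / b - 1)) = b powr g + g * (b powr g / b) * (a - b)"
    using b by (simp add: field_simps)
  also have "b powr g / b = b powr (g - 1)" using b by (simp add: powr_diff)
  finally show ?thesis by (simp add: algebra_simps)
qed

lemma tan_pos:
  fixes a b g :: real
  assumes g: "0 < g" "g < 1" and a: "a \<ge> 0" and b: "b > 0"
  shows "g * b powr (g - 1) * (b - a) \<le> b powr g - a powr g"
proof -
  have x: "(a / b) powr g \<le> 1 + g * (a / b - 1)"
  proof (cases "a = 0")
    case True then show ?thesis using g by simp
  next
    case False
    then have "(a / b) powr g * 1 powr (1 - g) \<le> g * (a / b) + (1 - g) * 1"
      using a b g by (intro Youngs_inequality_0) auto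
    then show ?thesis by (simp add: algebra_simps)
  qed
  have "a powr g = b powr g * (a / b) powr g" using a b by (simp add: powr_divide)
  also have "\<dots> \<le> b powr g * (1 + g * (a / b - 1))"
    using b x by (intro mult_left_mono) auto
  also have "b powr g * (1 + g * (a / b - 1)) = b powr g + g * (b powr g / b) * (a - b)"
    using b by (simp add: field_simps)
  also have "b powr g / b = b powr (g - 1)" using b by (simp add: powr_diff)
  finally show ?thesis by (simp add: algebra_simps)
qed

context ac begin

definition cc :: "('b \<Rightarrow> real) \<Rightarrow> 'b \<Rightarrow> real" where
  "cc q y = (\<Sum>x\<in>UNIV. p x * W x y powr \<alpha> / A q x)"

definition qs :: "('b \<Rightarrow> real) \<Rightarrow> 'b \<Rightarrow> real \<Rightarrow> 'b \<Rightarrow> real" where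
  "qs q y0 s = (\<lambda>y. (q y + (if y = y0 then s else 0)) / (1 + s))"

lemma qs_dist: assumes "is_dist q" "s > 0" shows "is_dist (qs q y0 s)"
proof -
  have "(\<Sum>y\<in>UNIV. q y + (if y = y0 then s else 0)) = 1 + s"
    using assms(1) unfolding is_dist_def by (simp add: sum.distrib)
  then have "(\<Sum>y\<in>UNIV. (q y + (if y = y0 then s else 0)) / (1 + s)) = 1"
    using assms(2) by (simp flip: sum_divide_distrib)
  then show ?thesis using assms unfolding is_dist_def qs_def by auto
qed

lemma qs_A:
  assumes "is_dist q" "s > 0"
  shows "A (qs q y0 s) x = (1 + s) powr (\<alpha> - 1) *
     (A q x + W x y0 powr \<alpha> * ((q y0 + s) powr (1 - \<alpha>) - q y0 powr (1 - \<alpha>)))"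
proof -
  have qn: "\<forall>y. 0 \<le> q y" using assms(1) unfolding is_dist_def by auto
  have "W x y powr \<alpha> * qs q y0 s y powr (1 - \<alpha>) = (1 + s) powr (\<alpha> - 1) *
      (W x y powr \<alpha> * q y powr (1 - \<alpha>) + (if y = y0 then W x y0 powr \<alpha> * ((q y0 + s) powr (1 - \<alpha>) - q y0 powr (1 - \<alpha>)) else 0))"
    for y
  proof -
    have "qs q y0 s y powr (1 - \<alpha>) = (q y + (if y = y0 then s else 0)) powr (1 - \<alpha>) / (1 + s) powr (1 - \<alpha>)"
      unfolding qs_def using qn assms(2) by (simp add: powr_divide)
    also have "\<dots> = (1 + s) powr (\<alpha> - 1) * (q y + (if y = y0 then s else 0)) powr (1 - \<alpha>)"
    proof -
      have e: "(1 + s) powr (\<alpha> - 1) = inverse ((1 + s) powr (1 - \<alpha>))"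
        by (simp add: powr_minus[symmetric])
      show ?thesis by (simp add: e divide_inverse mult.commute)
    qed
    finally show ?thesis by (auto simp: algebra_simps)
  qed
  then have "A (qs q y0 s) x = (\<Sum>y\<in>UNIV. (1 + s) powr (\<alpha> - 1) *
      (W x y powr \<alpha> * q y powr (1 - \<alpha>) + (if y = y0 then W x y0 powr \<alpha> * ((q y0 + s) powr (1 - \<alpha>) - q y0 powr (1 - \<alpha>)) else 0)))"
    unfolding A_def by simp
  also have "\<dots> = (1 + s) powr (\<alpha> - 1) * (A q x + W x y0 powr \<alpha> * ((q y0 + s) powr (1 - \<alpha>) - q y0 powr (1 - \<alpha>)))"
    unfolding A_def by (simp add: sum_distrib_left[symmetric] sum.distrib)
  finally show ?thesis .
qed

lemma qs_good:
  assumes "good q" "s > 0"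
  shows "good (qs q y0 s)"
proof -
  have qd: "is_dist q" using assms unfolding good_def by simp
  have qn: "\<forall>y. 0 \<le> q y" using qd unfolding is_dist_def by auto
  have pos: "qs q y0 s y > 0" if "q y > 0" for y
    unfolding qs_def using that assms(2) qn by (auto intro!: divide_pos_pos add_pos_nonneg)
  have "A (qs q y0 s) x > 0" if x: "p x > 0" for x
  proof -
    have "0 < A q x" using assms x unfolding good_def goodx_def by auto
    then obtain y where y: "W x y powr \<alpha> * q y powr (1 - \<alpha>) > 0"
    proof -
      assume h: "\<And>y. 0 < W x y powr \<alpha> * q y powr (1 - \<alpha>) \<Longrightarrow> thesis"
      show thesis
      proof (rule ccontr)
        assume "\<not> thesis"
        then have "\<forall>y\<in>UNIV. W x y powr \<alpha> * q y powr (1 - \<alpha>) \<le> 0" using h by (meson not_le)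
        then have "A q x \<le> 0" unfolding A_def by (intro sum_nonpos) auto
        then show False using \<open>0 < A q x\<close> by simp
      qed
    qed
    then have "q y > 0" "W x y > 0" using qn W_nn[of x y] by (auto simp: less_eq_real_def)
    then have "qs q y0 s y > 0" "W x y > 0" using pos by auto
    then have "W x y powr \<alpha> * qs q y0 s y powr (1 - \<alpha>) > 0" by simp
    moreover have "W x y powr \<alpha> * qs q y0 s y powr (1 - \<alpha>) \<le> A (qs q y0 s) x"
      unfolding A_def using qs_dist[OF qd assms(2)] unfolding is_dist_def by (intro member_le_sum) auto
    ultimately show ?thesis by simp
  qed
  then show ?thesis using assms pos qs_dist[OF qd assms(2)] unfolding good_def goodx_def by auto
qed

end



lemma aux_div: fixes a S1 S0 L SL :: real
  assumes "a \<noteq> 1" "S1 = (a - 1) * L + S0 + SL"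
  shows "S1 / (a - 1) - S0 / (a - 1) = L + SL / (a - 1)"
proof -
  have nz: "a - 1 \<noteq> 0" using assms by simp
  have "S1 / (a - 1) - S0 / (a - 1) = (S1 - S0) / (a - 1)" by (simp add: diff_divide_distrib)
  also have "S1 - S0 = (a - 1) * L + SL" using assms(2) by simp
  also have "((a - 1) * L + SL) / (a - 1) = L + SL / (a - 1)" using nz by (simp add: add_divide_distrib)
  finally show ?thesis .
qed

context ac begin

lemma phi_qs:
  fixes y0 :: 'b
  assumes g: "good q" and s: "s > 0"
  defines "\<Delta> \<equiv> (q y0 + s) powr (1 - \<alpha>) - q y0 powr (1 - \<alpha>)"
  shows "phi (qs q y0 s) - phi q = ln (1 + s) + (\<Sum>x\<in>UNIV. p x * ln (1 + W x y0 powr \<alpha> * \<Delta> / A q x)) / (\<alpha> - 1)"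
    and "\<And>x. p x > 0 \<Longrightarrow> 1 + W x y0 powr \<alpha> * \<Delta> / A q x > 0"
proof -
  have qd: "is_dist q" using g unfolding good_def by simp
  have gs: "good (qs q y0 s)" by (rule qs_good[OF g s])
  have key: "p x > 0 \<Longrightarrow> 1 + W x y0 powr \<alpha> * \<Delta> / A q x > 0 \<and>
     ln (A (qs q y0 s) x) = (\<alpha> - 1) * ln (1 + s) + ln (A q x) + ln (1 + W x y0 powr \<alpha> * \<Delta> / A q x)" for x
  proof -
    assume x: "p x > 0"
    have Aq: "A q x > 0" using g x unfolding good_def goodx_def by simp
    have As: "A (qs q y0 s) x > 0" using gs x unfolding good_def goodx_def by simp
    have eq: "A (qs q y0 s) x = (1 + s) powr (\<alpha> - 1) * (A q x + W x y0 powr \<alpha> * \<Delta>)"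
      unfolding \<Delta>_def by (rule qs_A[OF qd s])
    have ps: "(1 + s) powr (\<alpha> - 1) > 0" using s by simp
    have B: "A q x + W x y0 powr \<alpha> * \<Delta> > 0"
      using As ps unfolding eq by (simp add: zero_less_mult_iff)
    have e2: "A q x + W x y0 powr \<alpha> * \<Delta> = A q x * (1 + W x y0 powr \<alpha> * \<Delta> / A q x)"
      using Aq by (simp add: field_simps)
    have C: "1 + W x y0 powr \<alpha> * \<Delta> / A q x > 0" using B Aq e2 by (simp add: zero_less_mult_iff)
    have "ln (A (qs q y0 s) x) = ln ((1 + s) powr (\<alpha> - 1)) + ln (A q x + W x y0 powr \<alpha> * \<Delta>)"
      unfolding eq using ps B by (simp add: ln_mult)
    also have "ln (A q x + W x y0 powr \<alpha> * \<Delta>) = ln (A q x) + ln (1 + W x y0 powr \<alpha> * \<Delta> / A q x)"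
      unfolding e2 using Aq C by (simp add: ln_mult)
    finally show ?thesis using C s by simp
  qed
  then show "\<And>x. p x > 0 \<Longrightarrow> 1 + W x y0 powr \<alpha> * \<Delta> / A q x > 0" by blast
  have "(\<Sum>x\<in>UNIV. p x * ln (A (qs q y0 s) x)) = (\<Sum>x\<in>UNIV. (\<alpha> - 1) * ln (1 + s) * p x + p x * ln (A q x) + p x * ln (1 + W x y0 powr \<alpha> * \<Delta> / A q x))"
  proof (intro sum.cong refl)
    fix x
    show "p x * ln (A (qs q y0 s) x) = (\<alpha> - 1) * ln (1 + s) * p x + p x * ln (A q x) + p x * ln (1 + W x y0 powr \<alpha> * \<Delta> / A q x)"
    proof (cases "p x > 0")
      case True
      have "ln (A (qs q y0 s) x) = (\<alpha> - 1) * ln (1 + s) + ln (A q x) + ln (1 + W x y0 powr \<alpha> * \<Delta> / A q x)"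
        using key[OF True] by blast
      then show ?thesis by (simp add: distrib_left)
    next
      case False then have "p x = 0" using p_nn[of x] by simp
      then show ?thesis by simp
    qed
  qed
  also have "\<dots> = (\<alpha> - 1) * ln (1 + s) + (\<Sum>x\<in>UNIV. p x * ln (A q x)) + (\<Sum>x\<in>UNIV. p x * ln (1 + W x y0 powr \<alpha> * \<Delta> / A q x))"
    by (simp add: sum.distrib flip: sum_distrib_left add: p_sum)
  finally show "phi (qs q y0 s) - phi q = ln (1 + s) + (\<Sum>x\<in>UNIV. p x * ln (1 + W x y0 powr \<alpha> * \<Delta> / A q x)) / (\<alpha> - 1)"
    unfolding phi_def by (intro aux_div a1)
qed

end



context ac begin

lemma cc_nn: "is_dist q \<Longrightarrow> 0 \<le> cc q y"
  unfolding cc_def using p_nn A_nn by (intro sum_nonneg divide_nonneg_nonneg mult_nonneg_nonneg) auto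

lemma sum_pu: "(\<Sum>x\<in>UNIV. p x * (W x y0 powr \<alpha> * D / A q x)) = D * cc q y0"
  unfolding cc_def by (simp add: sum_distrib_left algebra_simps)

lemma perturb_gt1:
  fixes y0 :: 'b
  assumes ag: "\<alpha> > 1" and g: "good q" and mn: "\<forall>q'. good q' \<longrightarrow> phi q \<le> phi q'"
    and qy: "q y0 > 0" and gt: "cc q y0 * q y0 powr (-\<alpha>) > 1"
  shows False
proof -
  define a where "a = q y0"
  have qd: "is_dist q" using g unfolding good_def by simp
  have c0: "cc q y0 \<ge> 0" by (rule cc_nn[OF qd])
  have bound: "phi (qs q y0 s) - phi q \<le> s * (1 - cc q y0 * (a + s) powr (-\<alpha>))" if s: "s > 0" for s
  proof -
    define \<Delta> where "\<Delta> = (q y0 + s) powr (1 - \<alpha>) - q y0 powr (1 - \<alpha>)"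
    have D: "\<Delta> \<le> (1 - \<alpha>) * (a + s) powr (- \<alpha>) * s"
      using tan_neg[of "1 - \<alpha>" a "a + s"] ag qy s unfolding \<Delta>_def a_def by simp
    have "(\<Sum>x\<in>UNIV. p x * ln (1 + W x y0 powr \<alpha> * \<Delta> / A q x)) \<le> (\<Sum>x\<in>UNIV. p x * (W x y0 powr \<alpha> * \<Delta> / A q x))"
    proof (intro sum_mono)
      fix x
      show "p x * ln (1 + W x y0 powr \<alpha> * \<Delta> / A q x) \<le> p x * (W x y0 powr \<alpha> * \<Delta> / A q x)"
      proof (cases "p x > 0")
        case True
        have "1 + W x y0 powr \<alpha> * \<Delta> / A q x > 0" using phi_qs(2)[OF g s True] unfolding \<Delta>_def by simp
        then have "ln (1 + W x y0 powr \<alpha> * \<Delta> / A q x) \<le> W x y0 powr \<alpha> * \<Delta> / A q x"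
          using ln_le_minus_one by fastforce
        then show ?thesis using True by (intro mult_left_mono) auto
      next
        case False then have "p x = 0" using p_nn[of x] by simp
        then show ?thesis by simp
      qed
    qed
    also have "\<dots> = \<Delta> * cc q y0" by (rule sum_pu)
    finally have s1: "(\<Sum>x\<in>UNIV. p x * ln (1 + W x y0 powr \<alpha> * \<Delta> / A q x)) / (\<alpha> - 1) \<le> \<Delta> * cc q y0 / (\<alpha> - 1)"
      using ag by (intro divide_right_mono) auto
    have "\<Delta> * cc q y0 \<le> (1 - \<alpha>) * (a + s) powr (- \<alpha>) * s * cc q y0"
      using D c0 by (intro mult_right_mono) auto
    then have "\<Delta> * cc q y0 / (\<alpha> - 1) \<le> (1 - \<alpha>) * (a + s) powr (- \<alpha>) * s * cc q y0 / (\<alpha> - 1)"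
      using ag by (intro divide_right_mono) auto
    also have "(1 - \<alpha>) * (a + s) powr (- \<alpha>) * s * cc q y0 / (\<alpha> - 1) = - (s * (cc q y0 * (a + s) powr (- \<alpha>)))"
      using ag by (simp add: field_simps)
    finally have s2: "(\<Sum>x\<in>UNIV. p x * ln (1 + W x y0 powr \<alpha> * \<Delta> / A q x)) / (\<alpha> - 1) \<le> - (s * (cc q y0 * (a + s) powr (- \<alpha>)))"
      using s1 by linarith
    have "ln (1 + s) \<le> s" using s by (intro ln_add_one_self_le_self) simp
    then show ?thesis using phi_qs(1)[OF g s, of y0] s2 unfolding \<Delta>_def by (simp add: algebra_simps)
  qed
  have lim: "((\<lambda>s. cc q y0 * (a + s) powr (-\<alpha>)) \<longlongrightarrow> cc q y0 * (a + 0) powr (-\<alpha>)) (at_right 0)"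
    by (intro tendsto_intros) (use qy a_def in auto)
  then have "eventually (\<lambda>s. 1 < cc q y0 * (a + s) powr (-\<alpha>)) (at_right 0)"
    using gt unfolding a_def by (intro order_tendstoD(1)) auto
  moreover have "eventually (\<lambda>s. 0 < s) (at_right (0::real))" by (rule eventually_at_right_less)
  ultimately have "eventually (\<lambda>s. 0 < s \<and> 1 < cc q y0 * (a + s) powr (-\<alpha>)) (at_right 0)"
    by (rule eventually_conj[rotated])
  then obtain s where s: "0 < s" "1 < cc q y0 * (a + s) powr (-\<alpha>)"
    using eventually_happens[of _ "at_right (0::real)"] by (auto simp: trivial_limit_def[symmetric])
  have "s * (1 - cc q y0 * (a + s) powr (-\<alpha>)) < 0"
    using s by (intro mult_pos_neg) auto
  then have "phi (qs q y0 s) - phi q < 0"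
    using bound[OF s(1)] by linarith
  moreover have "phi q \<le> phi (qs q y0 s)" using mn qs_good[OF g s(1)] by blast
  ultimately show False by simp
qed

end



lemma ln_lower: fixes u :: real assumes "1 + u > 0" shows "u / (1 + u) \<le> ln (1 + u)"
proof -
  have "ln (1 / (1 + u)) \<le> 1 / (1 + u) - 1" using assms by (intro ln_le_minus_one) simp
  moreover have "ln (1 / (1 + u)) = - ln (1 + u)" using assms by (simp add: ln_div)
  moreover have "1 / (1 + u) - 1 = - (u / (1 + u))" using assms by (simp add: field_simps)
  ultimately show ?thesis by linarith
qed

lemma frac_mono_aux: fixes L u :: real assumes "0 \<le> L" "L \<le> u" shows "L / (1 + L) \<le> u / (1 + u)"
proof -
  have "L * (1 + u) \<le> u * (1 + L)" using assms by (simp add: algebra_simps)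
  then show ?thesis using assms by (simp add: divide_simps)
qed

context ac begin

lemma perturb_lt1:
  fixes y0 :: 'b
  assumes al: "\<alpha> < 1" and g: "good q" and mn: "\<forall>q'. good q' \<longrightarrow> phi q \<le> phi q'"
    and cond: "(q y0 > 0 \<and> cc q y0 * q y0 powr (-\<alpha>) > 1) \<or> (q y0 = 0 \<and> (\<exists>x. p x > 0 \<and> W x y0 > 0))"
  shows False
proof -
  define a where "a = q y0"
  have qd: "is_dist q" using g unfolding good_def by simp
  have anl: "a \<ge> 0" using qd unfolding a_def is_dist_def by auto
  have Apos: "p x > 0 \<Longrightarrow> A q x > 0" for x using g unfolding good_def goodx_def by auto
  define h where "h s = (\<Sum>x\<in>UNIV. p x * W x y0 powr \<alpha> / (A q x * (a + s) powr \<alpha> + (1 - \<alpha>) * W x y0 powr \<alpha> * s))" for s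
  have bound: "phi (qs q y0 s) - phi q \<le> s * (1 - h s)" if s: "s > 0" for s
  proof -
    define \<Delta> where "\<Delta> = (q y0 + s) powr (1 - \<alpha>) - q y0 powr (1 - \<alpha>)"
    have D: "(1 - \<alpha>) * (a + s) powr (- \<alpha>) * s \<le> \<Delta>"
      using tan_pos[of "1 - \<alpha>" a "a + s"] al anl s a0 unfolding \<Delta>_def a_def by simp
    have "(\<Sum>x\<in>UNIV. (1 - \<alpha>) * s * (p x * W x y0 powr \<alpha> / (A q x * (a + s) powr \<alpha> + (1 - \<alpha>) * W x y0 powr \<alpha> * s)))
        \<le> (\<Sum>x\<in>UNIV. p x * ln (1 + W x y0 powr \<alpha> * \<Delta> / A q x))"
    proof (intro sum_mono)
      fix x
      show "(1 - \<alpha>) * s * (p x * W x y0 powr \<alpha> / (A q x * (a + s) powr \<alpha> + (1 - \<alpha>) * W x y0 powr \<alpha> * s))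
          \<le> p x * ln (1 + W x y0 powr \<alpha> * \<Delta> / A q x)"
      proof (cases "p x > 0")
        case True
        have Ap: "A q x > 0" by (rule Apos[OF True])
        define u where "u = W x y0 powr \<alpha> * \<Delta> / A q x"
        define L where "L = (1 - \<alpha>) * W x y0 powr \<alpha> * (a + s) powr (- \<alpha>) * s / A q x"
        have L0: "0 \<le> L" unfolding L_def using al s Ap anl by (intro divide_nonneg_nonneg mult_nonneg_nonneg) auto
        have "W x y0 powr \<alpha> * ((1 - \<alpha>) * (a + s) powr (- \<alpha>) * s) \<le> W x y0 powr \<alpha> * \<Delta>"
          using D by (intro mult_left_mono) auto
        then have "(1 - \<alpha>) * W x y0 powr \<alpha> * (a + s) powr (- \<alpha>) * s \<le> W x y0 powr \<alpha> * \<Delta>"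
          by (simp add: algebra_simps)
        then have Lu: "L \<le> u" unfolding L_def u_def using Ap
          by (intro divide_right_mono) auto
        have u1: "1 + u > 0" using L0 Lu by simp
        have "L / (1 + L) \<le> ln (1 + u)" using frac_mono_aux[OF L0 Lu] ln_lower[OF u1] by linarith
        moreover have "L / (1 + L) = (1 - \<alpha>) * s * (W x y0 powr \<alpha> / (A q x * (a + s) powr \<alpha> + (1 - \<alpha>) * W x y0 powr \<alpha> * s))"
        proof -
          have bp: "(a + s) powr \<alpha> > 0" using anl s by simp
          have e: "(a + s) powr (- \<alpha>) = 1 / (a + s) powr \<alpha>" by (simp add: powr_minus divide_inverse)
          have dp: "A q x * (a + s) powr \<alpha> + (1 - \<alpha>) * W x y0 powr \<alpha> * s > 0"
            using Ap bp al s by (intro add_pos_nonneg) auto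
          define N where "N = (1 - \<alpha>) * W x y0 powr \<alpha> * s"
          define Dn where "Dn = A q x * (a + s) powr \<alpha>"
          have Dn0: "Dn > 0" unfolding Dn_def using Ap bp by simp
          have DN: "Dn + N > 0" using dp unfolding Dn_def N_def by (simp add: algebra_simps)
          have LN: "L = N / Dn" unfolding L_def e N_def Dn_def by (simp add: field_simps)
          have "L / (1 + L) = N / (Dn + N)" unfolding LN using Dn0 DN by (simp add: field_simps)
          also have "N / (Dn + N) = (1 - \<alpha>) * s * (W x y0 powr \<alpha> / (A q x * (a + s) powr \<alpha> + (1 - \<alpha>) * W x y0 powr \<alpha> * s))"
            unfolding N_def Dn_def by (simp add: algebra_simps)
          finally show ?thesis .
        qed
        ultimately have "(1 - \<alpha>) * s * (W x y0 powr \<alpha> / (A q x * (a + s) powr \<alpha> + (1 - \<alpha>) * W x y0 powr \<alpha> * s)) \<le> ln (1 + u)"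
          by simp
        then have "p x * ((1 - \<alpha>) * s * (W x y0 powr \<alpha> / (A q x * (a + s) powr \<alpha> + (1 - \<alpha>) * W x y0 powr \<alpha> * s))) \<le> p x * ln (1 + u)"
          using True by (intro mult_left_mono) auto
        then show ?thesis unfolding u_def by (simp add: algebra_simps)
      next
        case False then have "p x = 0" using p_nn[of x] by simp
        then show ?thesis by simp
      qed
    qed
    also have "(\<Sum>x\<in>UNIV. (1 - \<alpha>) * s * (p x * W x y0 powr \<alpha> / (A q x * (a + s) powr \<alpha> + (1 - \<alpha>) * W x y0 powr \<alpha> * s)))
        = (1 - \<alpha>) * s * h s" unfolding h_def by (simp add: sum_distrib_left)
    finally have s1: "(1 - \<alpha>) * s * h s \<le> (\<Sum>x\<in>UNIV. p x * ln (1 + W x y0 powr \<alpha> * \<Delta> / A q x))" .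
    have s2: "(\<Sum>x\<in>UNIV. p x * ln (1 + W x y0 powr \<alpha> * \<Delta> / A q x)) / (\<alpha> - 1) \<le> - (s * h s)"
    proof -
      have "(\<Sum>x\<in>UNIV. p x * ln (1 + W x y0 powr \<alpha> * \<Delta> / A q x)) / (\<alpha> - 1) \<le> (1 - \<alpha>) * s * h s / (\<alpha> - 1)"
        using s1 al by (intro divide_right_mono_neg) auto
      also have "(1 - \<alpha>) * s * h s / (\<alpha> - 1) = - (s * h s)" using al by (simp add: field_simps)
      finally show ?thesis .
    qed
    have "ln (1 + s) \<le> s" using s by (intro ln_add_one_self_le_self) simp
    then show ?thesis using phi_qs(1)[OF g s, of y0] s2 unfolding \<Delta>_def by (simp add: algebra_simps)
  qed
  have ev: "eventually (\<lambda>s. 1 < h s) (at_right 0)"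
  proof (cases "a > 0")
    case True
    then have ca: "cc q y0 * a powr (-\<alpha>) > 1" using cond unfolding a_def by auto
    have lim: "(h \<longlongrightarrow> (\<Sum>x\<in>UNIV. p x * W x y0 powr \<alpha> / (A q x * (a + 0) powr \<alpha> + (1 - \<alpha>) * W x y0 powr \<alpha> * 0))) (at_right 0)"
      unfolding h_def
    proof (intro tendsto_sum)
      fix x
      show "((\<lambda>s. p x * W x y0 powr \<alpha> / (A q x * (a + s) powr \<alpha> + (1 - \<alpha>) * W x y0 powr \<alpha> * s)) \<longlongrightarrow>
          p x * W x y0 powr \<alpha> / (A q x * (a + 0) powr \<alpha> + (1 - \<alpha>) * W x y0 powr \<alpha> * 0)) (at_right 0)"
      proof (cases "p x > 0")
        case True
        have "A q x * (a + 0) powr \<alpha> \<noteq> 0" using Apos[OF True] \<open>a > 0\<close> by simp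
        then show ?thesis by (intro tendsto_intros) (use \<open>a > 0\<close> in auto)
      next
        case False then have "p x = 0" using p_nn[of x] by simp
        then show ?thesis by simp
      qed
    qed
    have "(\<Sum>x\<in>UNIV. p x * W x y0 powr \<alpha> / (A q x * (a + 0) powr \<alpha> + (1 - \<alpha>) * W x y0 powr \<alpha> * 0))
        = cc q y0 * a powr (-\<alpha>)"
      unfolding cc_def by (simp add: sum_distrib_right sum_distrib_left powr_minus divide_inverse algebra_simps)
    then show ?thesis using lim ca by (intro order_tendstoD(1)) auto
  next
    case False
    then have a00: "a = 0" using anl by simp
    then obtain x0 where x0: "p x0 > 0" "W x0 y0 > 0" using cond unfolding a_def by auto
    define den where "den s = A q x0 * (a + s) powr \<alpha> + (1 - \<alpha>) * W x0 y0 powr \<alpha> * s" for s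
    have "(den \<longlongrightarrow> A q x0 * (a + 0) powr \<alpha> + (1 - \<alpha>) * W x0 y0 powr \<alpha> * 0) (at_right 0)"
      unfolding den_def a00
      by (intro tendsto_intros) (use a0 in \<open>auto intro: eventually_mono[OF eventually_at_right_less]\<close>)
    then have "(den \<longlongrightarrow> 0) (at_right 0)" using a00 anl by simp
    moreover have "p x0 * W x0 y0 powr \<alpha> > 0" using x0 by simp
    ultimately have e1: "eventually (\<lambda>s. den s < p x0 * W x0 y0 powr \<alpha>) (at_right 0)"
      by (intro order_tendstoD(2)) auto
    show ?thesis
    proof (rule eventually_mono[OF eventually_conj[OF e1 eventually_at_right_less]])
      fix s :: real assume sa: "den s < p x0 * W x0 y0 powr \<alpha> \<and> 0 < s"
      have dp: "den s > 0" unfolding den_def using Apos[OF x0(1)] sa a00 al x0 by (intro add_pos_nonneg) auto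
      have t1: "1 < p x0 * W x0 y0 powr \<alpha> / den s" using sa dp by simp
      have "p x0 * W x0 y0 powr \<alpha> / den s \<le> h s"
        unfolding h_def den_def
      proof (rule member_le_sum[of x0 UNIV "\<lambda>x. p x * W x y0 powr \<alpha> / (A q x * (a + s) powr \<alpha> + (1 - \<alpha>) * W x y0 powr \<alpha> * s)", simplified])
        fix x
        show "0 \<le> p x * W x y0 powr \<alpha> / (A q x * (a + s) powr \<alpha> + (1 - \<alpha>) * W x y0 powr \<alpha> * s)"
          using p_nn A_nn[OF qd] al sa anl by (intro divide_nonneg_nonneg mult_nonneg_nonneg add_nonneg_nonneg) auto
      qed
      then show "1 < h s" using t1 by simp
    qed
  qed
  obtain s where s: "0 < s" "1 < h s"
    using eventually_happens[OF eventually_conj[OF eventually_at_right_less ev]] by auto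
  have "s * (1 - h s) < 0" using s by (intro mult_pos_neg) auto
  then have "phi (qs q y0 s) - phi q < 0" using bound[OF s(1)] by linarith
  moreover have "phi q \<le> phi (qs q y0 s)" using mn qs_good[OF g s(1)] by blast
  ultimately show False by simp
qed

end



context ac begin

lemma fixed_point:
  assumes g: "good q" and mn: "\<forall>q'. good q' \<longrightarrow> phi q \<le> phi q'"
  shows "\<forall>y. q y powr (1 - \<alpha>) * cc q y = q y"
    and "\<forall>x y. p x > 0 \<longrightarrow> W x y > 0 \<longrightarrow> q y > 0"
proof -
  have qd: "is_dist q" using g unfolding good_def by simp
  have qn: "\<forall>y. 0 \<le> q y" using qd unfolding is_dist_def by auto
  show supp: "\<forall>x y. p x > 0 \<longrightarrow> W x y > 0 \<longrightarrow> q y > 0"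
  proof (intro allI impI)
    fix x y assume x: "p x > 0" and y: "W x y > 0"
    show "q y > 0"
    proof (cases "\<alpha> > 1")
      case True then show ?thesis using g x y unfolding good_def goodx_def by auto
    next
      case False
      then have al: "\<alpha> < 1" using a1 by simp
      show ?thesis
      proof (rule ccontr)
        assume "\<not> q y > 0"
        then have "q y = 0" using qn[rule_format, of y] by simp
        then show False using perturb_lt1[OF al g mn, of y] x y by auto
      qed
    qed
  qed
  have le1: "cc q y * q y powr (-\<alpha>) \<le> 1" if "q y > 0" for y
  proof (rule ccontr)
    assume "\<not> ?thesis"
    then have gt: "cc q y * q y powr (-\<alpha>) > 1" by simp
    show False
    proof (cases "\<alpha> > 1")
      case True show False by (rule perturb_gt1[OF True g mn that gt])
    next
      case False
      then have al: "\<alpha> < 1" using a1 by simp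
      show False using perturb_lt1[OF al g mn, of y] that gt by auto
    qed
  qed
  have z: "cc q y = 0" if "q y = 0" for y
    unfolding cc_def
  proof (intro sum.neutral ballI)
    fix x
    show "p x * W x y powr \<alpha> / A q x = 0"
    proof (cases "p x > 0")
      case True
      then have "\<not> W x y > 0" using supp that by force
      then have "W x y = 0" using W_nn[of x y] by simp
      then show ?thesis by simp
    next
      case False then have "p x = 0" using p_nn[of x] by simp
      then show ?thesis by simp
    qed
  qed
  define T where "T y = q y powr (1 - \<alpha>) * cc q y" for y
  have Tle: "T y \<le> q y" for y
  proof (cases "q y > 0")
    case True
    have "q y powr (1 - \<alpha>) = q y * q y powr (-\<alpha>)"
      using True powr_add[of "q y" 1 "-\<alpha>"] by simp
    then have "T y = q y * (cc q y * q y powr (-\<alpha>))" unfolding T_def by simp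
    also have "\<dots> \<le> q y * 1" using le1[OF True] True by (intro mult_left_mono) auto
    finally show ?thesis by simp
  next
    case False
    then have "q y = 0" using qn[rule_format, of y] by simp
    then show ?thesis unfolding T_def by simp
  qed
  have "(\<Sum>y\<in>UNIV. T y) = (\<Sum>y\<in>UNIV. \<Sum>x\<in>UNIV. p x / A q x * (W x y powr \<alpha> * q y powr (1 - \<alpha>)))"
    unfolding T_def cc_def by (simp add: sum_distrib_left algebra_simps)
  also have "\<dots> = (\<Sum>x\<in>UNIV. p x / A q x * A q x)"
    unfolding A_def by (subst sum.swap) (simp add: sum_distrib_left)
  also have "\<dots> = (\<Sum>x\<in>UNIV. p x)"
  proof (intro sum.cong refl)
    fix x
    show "p x / A q x * A q x = p x"
    proof (cases "p x > 0")
      case True then have "A q x > 0" using g unfolding good_def goodx_def by auto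
      then show ?thesis by simp
    next
      case False then have "p x = 0" using p_nn[of x] by simp
      then show ?thesis by simp
    qed
  qed
  also have "\<dots> = 1" by (rule p_sum)
  finally have sT: "(\<Sum>y\<in>UNIV. T y) = 1" .
  have "(\<Sum>y\<in>UNIV. q y - T y) = 0" using sT qd unfolding is_dist_def by (simp add: sum_subtractf)
  then have "\<forall>y\<in>UNIV. q y - T y = 0"
    using Tle by (subst sum_nonneg_eq_0_iff[symmetric]) auto
  then show "\<forall>y. q y powr (1 - \<alpha>) * cc q y = q y" unfolding T_def by simp
qed

end



lemma KL_fin:
  assumes "\<forall>z. P z \<noteq> 0 \<longrightarrow> Q z \<noteq> 0"
  shows "KL P Q = ereal (\<Sum>z\<in>UNIV. if P z = 0 then 0 else P z * ln (P z / Q z))"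
proof -
  have "KL P Q = (\<Sum>z\<in>UNIV. ereal (if P z = 0 then 0 else P z * ln (P z / Q z)))"
    unfolding KL_def using assms by (intro sum.cong) auto
  then show ?thesis by simp
qed

lemma KL_inf:
  assumes "P z \<noteq> 0" "Q z = 0"
  shows "KL P Q = \<infinity>"
  unfolding KL_def sum_Pinfty using assms by (intro conjI bexI[of _ z]) auto

lemma sum_pairs: "(\<Sum>z\<in>(UNIV::('a::finite \<times> 'b::finite) set). f z) = (\<Sum>x\<in>UNIV. \<Sum>y\<in>UNIV. f (x, y))"
  using sum.cartesian_product[of "\<lambda>x y. f (x, y)" UNIV UNIV] by (simp add: case_prod_beta')

lemma elr_fin:
  assumes "\<forall>x y. pX x * V x y \<noteq> 0 \<longrightarrow> r y x \<noteq> 0"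
  shows "exp_log_ratio pX V r = ereal (\<Sum>x\<in>UNIV. \<Sum>y\<in>UNIV. if pX x * V x y = 0 then 0 else pX x * V x y * ln (r y x / pX x))"
proof -
  have "exp_log_ratio pX V r = (\<Sum>x\<in>UNIV. \<Sum>y\<in>UNIV. (if pX x * V x y = 0 then 0
                            else if r y x = 0 then -\<infinity>
                            else ereal (pX x * V x y * ln (r y x / pX x))))"
    unfolding exp_log_ratio_def sum_pairs by simp
  also have "\<dots> = (\<Sum>x\<in>UNIV. \<Sum>y\<in>UNIV. ereal (if pX x * V x y = 0 then 0 else pX x * V x y * ln (r y x / pX x)))"
    using assms by (intro sum.cong refl) auto
  finally show ?thesis by simp
qed

context ac begin

lemma log_identity:
  assumes W: "w > 0" and q: "qq > 0" and A: "a > 0"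
  shows "\<alpha> / (1 - \<alpha>) * ln ((w powr \<alpha> * qq powr (1 - \<alpha>) / a) / w) + ln ((w powr \<alpha> * qq powr (1 - \<alpha>) / a) / qq) = ln a / (\<alpha> - 1)"
proof -
  have lv: "ln (w powr \<alpha> * qq powr (1 - \<alpha>) / a) = \<alpha> * ln w + (1 - \<alpha>) * ln qq - ln a"
    using W q A by (simp add: ln_div ln_mult)
  have pv: "w powr \<alpha> * qq powr (1 - \<alpha>) / a > 0" using W q A by simp
  have "\<alpha> / (1 - \<alpha>) * ln ((w powr \<alpha> * qq powr (1 - \<alpha>) / a) / w) + ln ((w powr \<alpha> * qq powr (1 - \<alpha>) / a) / qq)
     = \<alpha> / (1 - \<alpha>) * ((\<alpha> - 1) * ln w + (1 - \<alpha>) * ln qq - ln a) + (\<alpha> * ln w - \<alpha> * ln qq - ln a)"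
  proof -
    have e1: "ln ((w powr \<alpha> * qq powr (1 - \<alpha>) / a) / w) = ln (w powr \<alpha> * qq powr (1 - \<alpha>) / a) - ln w"
      using pv W by (rule ln_divide_pos)
    have e2: "ln ((w powr \<alpha> * qq powr (1 - \<alpha>) / a) / qq) = ln (w powr \<alpha> * qq powr (1 - \<alpha>) / a) - ln qq"
      using pv q by (rule ln_divide_pos)
    show ?thesis unfolding e1 e2 lv by (simp add: algebra_simps)
  qed
  also have "\<dots> = ln a / (\<alpha> - 1)"
  proof -
    have n: "1 - \<alpha> \<noteq> 0" "\<alpha> - 1 \<noteq> 0" using a1 by auto
    then show ?thesis by (simp add: field_simps)
  qed
  finally show ?thesis .
qed

end



context ac begin

definition fpq :: "('b \<Rightarrow> real) \<Rightarrow> bool" where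
  "fpq q \<longleftrightarrow> good q \<and> (\<forall>y. q y powr (1 - \<alpha>) * cc q y = q y) \<and> (\<forall>x y. p x > 0 \<longrightarrow> W x y > 0 \<longrightarrow> q y > 0)"

definition Vs :: "('b \<Rightarrow> real) \<Rightarrow> 'a \<Rightarrow> 'b \<Rightarrow> real" where
  "Vs q x y = (if p x > 0 then W x y powr \<alpha> * q y powr (1 - \<alpha>) / A q x else W x y)"

definition rs :: "('b \<Rightarrow> real) \<Rightarrow> 'b \<Rightarrow> 'a \<Rightarrow> real" where
  "rs q y x = (if q y > 0 then p x * Vs q x y / q y else p x)"

lemma fpq_facts:
  assumes "fpq q"
  shows "good q" "is_dist q" "\<And>y. q y powr (1 - \<alpha>) * cc q y = q y" "\<And>x y. p x > 0 \<Longrightarrow> W x y > 0 \<Longrightarrow> q y > 0"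
    "\<And>x. p x > 0 \<Longrightarrow> A q x > 0" "\<And>y. 0 \<le> q y"
  using assms unfolding fpq_def good_def goodx_def is_dist_def by auto

lemma Vs_nn: "fpq q \<Longrightarrow> 0 \<le> Vs q x y"
  unfolding Vs_def using fpq_facts[of q] W_nn A_nn by (auto intro!: divide_nonneg_nonneg)

lemma Vs_pos: "fpq q \<Longrightarrow> p x > 0 \<Longrightarrow> Vs q x y > 0 \<longleftrightarrow> W x y > 0"
proof -
  assume f: "fpq q" and x: "p x > 0"
  show ?thesis
  proof
    assume "Vs q x y > 0" then show "W x y > 0" unfolding Vs_def using x W_nn[of x y]
      by (cases "W x y = 0") (auto simp: less_eq_real_def)
  next
    assume w: "W x y > 0"
    then have "q y > 0" using fpq_facts(4)[OF f x] by blast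
    then show "Vs q x y > 0" unfolding Vs_def using x w fpq_facts(5)[OF f x] by simp
  qed
qed

lemma Vs_sum: "fpq q \<Longrightarrow> (\<Sum>y\<in>UNIV. Vs q x y) = 1"
proof -
  assume f: "fpq q"
  show ?thesis
  proof (cases "p x > 0")
    case True
    have "(\<Sum>y\<in>UNIV. Vs q x y) = (\<Sum>y\<in>UNIV. W x y powr \<alpha> * q y powr (1 - \<alpha>)) / A q x"
      unfolding Vs_def using True by (simp add: sum_divide_distrib)
    also have "\<dots> = A q x / A q x" unfolding A_def ..
    finally have "(\<Sum>y\<in>UNIV. Vs q x y) = A q x / A q x" .
    then show ?thesis using fpq_facts(5)[OF f True] by simp
  next
    case False then show ?thesis unfolding Vs_def using W_sum by simp
  qed
qed

lemma Vs_channel: "fpq q \<Longrightarrow> is_channel (Vs q)"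
  unfolding is_channel_def is_dist_def using Vs_nn Vs_sum by auto

lemma pV_sum: "fpq q \<Longrightarrow> (\<Sum>x\<in>UNIV. p x * Vs q x y) = q y"
proof -
  assume f: "fpq q"
  have "(\<Sum>x\<in>UNIV. p x * Vs q x y) = (\<Sum>x\<in>UNIV. q y powr (1 - \<alpha>) * (p x * W x y powr \<alpha> / A q x))"
  proof (intro sum.cong refl)
    fix x show "p x * Vs q x y = q y powr (1 - \<alpha>) * (p x * W x y powr \<alpha> / A q x)"
    proof (cases "p x > 0")
      case True then show ?thesis unfolding Vs_def by simp
    next
      case False then have "p x = 0" using p_nn[of x] by simp
      then show ?thesis by simp
    qed
  qed
  also have "\<dots> = q y powr (1 - \<alpha>) * cc q y" unfolding cc_def by (simp add: sum_distrib_left)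
  also have "\<dots> = q y" using fpq_facts(3)[OF f] by simp
  finally show ?thesis .
qed

lemma rs_channel: "fpq q \<Longrightarrow> is_channel (rs q)"
proof -
  assume f: "fpq q"
  have "is_dist (rs q y)" for y
  proof (cases "q y > 0")
    case True
    have "(\<Sum>x\<in>UNIV. rs q y x) = (\<Sum>x\<in>UNIV. p x * Vs q x y) / q y"
      unfolding rs_def using True by (simp add: sum_divide_distrib)
    also have "\<dots> = 1" using pV_sum[OF f] True by simp
    finally show ?thesis unfolding is_dist_def rs_def using True p_nn Vs_nn[OF f]
      by (auto intro!: divide_nonneg_nonneg)
  next
    case False then show ?thesis unfolding is_dist_def rs_def using pd unfolding is_dist_def by simp
  qed
  then show ?thesis unfolding is_channel_def by simp
qed

lemma rs_pos: "fpq q \<Longrightarrow> p x * Vs q x y \<noteq> 0 \<Longrightarrow> rs q y x > 0 \<and> rs q y x / p x = Vs q x y / q y"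
proof -
  assume f: "fpq q" and nz: "p x * Vs q x y \<noteq> 0"
  have px: "p x > 0" using nz p_nn[of x] by (simp add: less_eq_real_def)
  have "Vs q x y > 0" using nz Vs_nn[OF f, of x y] by (simp add: less_eq_real_def)
  then have "W x y > 0" using Vs_pos[OF f px] by simp
  then have qy: "q y > 0" using fpq_facts(4)[OF f px] by blast
  show ?thesis unfolding rs_def using qy px \<open>Vs q x y > 0\<close> by simp
qed

definition Kv :: "('b \<Rightarrow> real) \<Rightarrow> real" where
  "Kv q = (\<Sum>x\<in>UNIV. \<Sum>y\<in>UNIV. if p x * Vs q x y = 0 then 0
      else p x * Vs q x y * (\<alpha> / (1 - \<alpha>) * ln (Vs q x y / W x y) + ln (Vs q x y / q y)))"

lemma Kv_phi: "fpq q \<Longrightarrow> Kv q = phi q"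
proof -
  assume f: "fpq q"
  have "Kv q = (\<Sum>x\<in>UNIV. \<Sum>y\<in>UNIV. p x * Vs q x y * (ln (A q x) / (\<alpha> - 1)))"
    unfolding Kv_def
  proof (intro sum.cong refl)
    fix x y
    show "(if p x * Vs q x y = 0 then 0
      else p x * Vs q x y * (\<alpha> / (1 - \<alpha>) * ln (Vs q x y / W x y) + ln (Vs q x y / q y))) =
      p x * Vs q x y * (ln (A q x) / (\<alpha> - 1))"
    proof (cases "p x * Vs q x y = 0")
      case True then show ?thesis by simp
    next
      case False
      have px: "p x > 0" using False p_nn[of x] by (simp add: less_eq_real_def)
      have "Vs q x y > 0" using False Vs_nn[OF f, of x y] by (simp add: less_eq_real_def)
      then have w: "W x y > 0" using Vs_pos[OF f px] by simp
      then have qy: "q y > 0" using fpq_facts(4)[OF f px] by blast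
      have "\<alpha> / (1 - \<alpha>) * ln (Vs q x y / W x y) + ln (Vs q x y / q y) = ln (A q x) / (\<alpha> - 1)"
      proof -
        have "Vs q x y = W x y powr \<alpha> * q y powr (1 - \<alpha>) / A q x" using px unfolding Vs_def by simp
        then show ?thesis using log_identity[OF w qy fpq_facts(5)[OF f px]] by simp
      qed
      then show ?thesis using False by simp
    qed
  qed
  also have "\<dots> = (\<Sum>x\<in>UNIV. p x * (ln (A q x) / (\<alpha> - 1)) * (\<Sum>y\<in>UNIV. Vs q x y))"
    by (simp add: sum_distrib_left sum_divide_distrib mult.commute mult.left_commute)
  also have "\<dots> = phi q" unfolding phi_def using Vs_sum[OF f] by (simp add: sum_divide_distrib)
  finally show ?thesis .
qed

lemma joint_simp: "joint pX V (x, y) = pX x * V x y" unfolding joint_def by simp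
lemma prodd_simp: "prodd pX q (x, y) = pX x * q y" unfolding prodd_def by simp

lemma KL1_fin: "fpq q \<Longrightarrow> KL (joint p (Vs q)) (joint p W) =
   ereal (\<Sum>x\<in>UNIV. \<Sum>y\<in>UNIV. if p x * Vs q x y = 0 then 0 else p x * Vs q x y * ln (Vs q x y / W x y))"
proof -
  assume f: "fpq q"
  have c: "\<forall>z. joint p (Vs q) z \<noteq> 0 \<longrightarrow> joint p W z \<noteq> 0"
  proof (intro allI impI)
    fix z :: "'a \<times> 'b" obtain x y where z: "z = (x, y)" by fastforce
    assume "joint p (Vs q) z \<noteq> 0"
    then have nz: "p x * Vs q x y \<noteq> 0" unfolding z joint_simp .
    have px: "p x > 0" using nz p_nn[of x] by (simp add: less_eq_real_def)
    have "Vs q x y > 0" using nz Vs_nn[OF f, of x y] by (simp add: less_eq_real_def)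
    then have w: "W x y > 0" using Vs_pos[OF f px] by simp
    then show "joint p W z \<noteq> 0" unfolding z joint_simp using px by simp
  qed
  show ?thesis unfolding KL_fin[OF c] sum_pairs joint_simp
    by (intro arg_cong[where f=ereal] sum.cong refl) auto
qed

lemma KL2_fin: "fpq q \<Longrightarrow> KL (joint p (Vs q)) (prodd p q) =
   ereal (\<Sum>x\<in>UNIV. \<Sum>y\<in>UNIV. if p x * Vs q x y = 0 then 0 else p x * Vs q x y * ln (Vs q x y / q y))"
proof -
  assume f: "fpq q"
  have c: "\<forall>z. joint p (Vs q) z \<noteq> 0 \<longrightarrow> prodd p q z \<noteq> 0"
  proof (intro allI impI)
    fix z :: "'a \<times> 'b" obtain x y where z: "z = (x, y)" by fastforce
    assume "joint p (Vs q) z \<noteq> 0"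
    then have nz: "p x * Vs q x y \<noteq> 0" unfolding z joint_simp .
    have px: "p x > 0" using nz p_nn[of x] by (simp add: less_eq_real_def)
    have "Vs q x y > 0" using nz Vs_nn[OF f, of x y] by (simp add: less_eq_real_def)
    then have w: "W x y > 0" using Vs_pos[OF f px] by simp
    then have "q y > 0" using fpq_facts(4)[OF f px] by blast
    then show "prodd p q z \<noteq> 0" unfolding z prodd_simp using px by simp
  qed
  show ?thesis unfolding KL_fin[OF c] sum_pairs joint_simp prodd_simp
    by (intro arg_cong[where f=ereal] sum.cong refl) auto
qed

lemma elr_opt: "fpq q \<Longrightarrow> exp_log_ratio p (Vs q) (rs q) =
   ereal (\<Sum>x\<in>UNIV. \<Sum>y\<in>UNIV. if p x * Vs q x y = 0 then 0 else p x * Vs q x y * ln (Vs q x y / q y))"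
proof -
  assume f: "fpq q"
  have c: "\<forall>x y. p x * Vs q x y \<noteq> 0 \<longrightarrow> rs q y x \<noteq> 0" using rs_pos[OF f] by force
  show ?thesis unfolding elr_fin[OF c]
    by (intro arg_cong[where f=ereal] sum.cong refl) (use rs_pos[OF f] in auto)
qed

lemma combine: "ereal c * ereal (\<Sum>x\<in>UNIV. \<Sum>y\<in>UNIV. if P x y = 0 then 0 else P x y * ln (U x y))
   + ereal (\<Sum>x\<in>UNIV. \<Sum>y\<in>UNIV. if P x y = 0 then 0 else P x y * ln (R x y))
   = ereal (\<Sum>x\<in>UNIV. \<Sum>y\<in>UNIV. if P x y = 0 then 0 else P x y * (c * ln (U x y) + ln (R x y)))"
proof -
  have "c * (\<Sum>x\<in>UNIV. \<Sum>y\<in>UNIV. if P x y = 0 then 0 else P x y * ln (U x y))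
   + (\<Sum>x\<in>UNIV. \<Sum>y\<in>UNIV. if P x y = 0 then 0 else P x y * ln (R x y))
   = (\<Sum>x\<in>UNIV. \<Sum>y\<in>UNIV. if P x y = 0 then 0 else P x y * (c * ln (U x y) + ln (R x y)))"
    by (simp add: sum_distrib_left sum.distrib[symmetric] algebra_simps if_distrib cong: if_cong)
  then show ?thesis by simp
qed

lemma FC_opt: "fpq q \<Longrightarrow> F_C \<alpha> p W (Vs q) q = ereal (phi q)"
  unfolding F_C_def KL1_fin KL2_fin combine Kv_phi[symmetric] Kv_def by simp

lemma FCt_opt: "fpq q \<Longrightarrow> F_C_tilde \<alpha> p W (Vs q) (rs q) = ereal (phi q)"
  unfolding F_C_tilde_def KL1_fin elr_opt combine Kv_phi[symmetric] Kv_def by simp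

end



context ac begin

lemma rs_term:
  assumes w: "w > 0" and pp: "pp > 0" and qq: "qq > 0" and a: "a > 0"
  shows "w * (pp * (w powr \<alpha> * qq powr (1 - \<alpha>) / a) / qq) powr (1 - 1 / \<alpha>)
       = pp powr (1 - 1 / \<alpha>) * a powr (- (1 - 1 / \<alpha>)) * (w powr \<alpha> * qq powr (1 - \<alpha>))"
proof -
  define b where "b = 1 - 1 / \<alpha>"
  have ab: "\<alpha> * b = \<alpha> - 1" unfolding b_def using a0 by (simp add: field_simps)
  have r: "pp * (w powr \<alpha> * qq powr (1 - \<alpha>) / a) / qq > 0" using w pp qq a by simp
  have "ln (w * (pp * (w powr \<alpha> * qq powr (1 - \<alpha>) / a) / qq) powr b)
      = ln w + b * (ln pp + (\<alpha> * ln w + (1 - \<alpha>) * ln qq - ln a) - ln qq)"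
    using w pp qq a r by (simp add: ln_mult ln_div)
  also have "\<dots> = b * ln pp - b * ln a + \<alpha> * ln w + (1 - \<alpha>) * ln qq + (\<alpha> * b - (\<alpha> - 1)) * ln w - (\<alpha> * b - (\<alpha> - 1)) * ln qq"
    by (simp add: algebra_simps)
  also have "\<dots> = b * ln pp - b * ln a + \<alpha> * ln w + (1 - \<alpha>) * ln qq" unfolding ab by simp
  also have "\<dots> = ln (pp powr b * a powr (- b) * (w powr \<alpha> * qq powr (1 - \<alpha>)))"
    using w pp qq a by (simp add: ln_mult)
  finally have "ln (w * (pp * (w powr \<alpha> * qq powr (1 - \<alpha>) / a) / qq) powr b) = ln (pp powr b * a powr (- b) * (w powr \<alpha> * qq powr (1 - \<alpha>)))" .
  then have "w * (pp * (w powr \<alpha> * qq powr (1 - \<alpha>) / a) / qq) powr b = pp powr b * a powr (- b) * (w powr \<alpha> * qq powr (1 - \<alpha>))"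
    using w pp qq a r by (subst (asm) ln_inj_iff) auto
  then show ?thesis unfolding b_def .
qed

lemma inner_opt:
  assumes f: "fpq q" and px: "p x > 0"
  shows "inner_sum \<alpha> W (rs q) x = ereal (p x powr (1 - 1 / \<alpha>) * A q x powr (- (1 - 1 / \<alpha>)) * A q x)"
proof -
  have Ap: "A q x > 0" using fpq_facts(5)[OF f px] .
  have "inner_sum \<alpha> W (rs q) x = (\<Sum>y\<in>UNIV. ereal (p x powr (1 - 1 / \<alpha>) * A q x powr (- (1 - 1 / \<alpha>)) * (W x y powr \<alpha> * q y powr (1 - \<alpha>))))"
    unfolding inner_sum_def
  proof (intro sum.cong refl)
    fix y
    show "(if W x y = 0 then 0 else if rs q y x = 0 then if \<alpha> < 1 then \<infinity> else 0
           else ereal (W x y * rs q y x powr (1 - 1 / \<alpha>))) =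
          ereal (p x powr (1 - 1 / \<alpha>) * A q x powr (- (1 - 1 / \<alpha>)) * (W x y powr \<alpha> * q y powr (1 - \<alpha>)))"
    proof (cases "W x y = 0")
      case True then show ?thesis by simp
    next
      case False
      then have w: "W x y > 0" using W_nn[of x y] by simp
      then have qy: "q y > 0" using fpq_facts(4)[OF f px] by blast
      have V: "Vs q x y = W x y powr \<alpha> * q y powr (1 - \<alpha>) / A q x" using px unfolding Vs_def by simp
      have Vp: "Vs q x y > 0" using Vs_pos[OF f px] w by simp
      have rsv: "rs q y x = p x * (W x y powr \<alpha> * q y powr (1 - \<alpha>) / A q x) / q y"
        unfolding rs_def using qy V by simp
      have "rs q y x > 0" using rs_pos[OF f, of x y] px Vp by simp
      then show ?thesis using False rs_term[OF w px qy Ap] px qy Ap unfolding rsv by simp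
    qed
  qed
  also have "\<dots> = ereal (p x powr (1 - 1 / \<alpha>) * A q x powr (- (1 - 1 / \<alpha>)) * A q x)"
    unfolding A_def by (simp add: sum_distrib_left)
  finally show ?thesis .
qed

lemma G_opt: "fpq q \<Longrightarrow> ereal (entropy p) + G_obj \<alpha> p W (rs q) = ereal (phi q)"
proof -
  assume f: "fpq q"
  define b where "b = 1 - 1 / \<alpha>"
  have "(\<Sum>x\<in>UNIV. ereal (p x) * eln (inner_sum \<alpha> W (rs q) x)) = (\<Sum>x\<in>UNIV. ereal (p x * (b * ln (p x) + (1 - b) * ln (A q x))))"
  proof (intro sum.cong refl)
    fix x
    show "ereal (p x) * eln (inner_sum \<alpha> W (rs q) x) = ereal (p x * (b * ln (p x) + (1 - b) * ln (A q x)))"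
    proof (cases "p x > 0")
      case True
      have Ap: "A q x > 0" using fpq_facts(5)[OF f True] .
      have pos: "p x powr b * A q x powr (- b) * A q x > 0" using True Ap by simp
      have "ln (p x powr b * A q x powr (- b) * A q x) = b * ln (p x) + (1 - b) * ln (A q x)"
        using True Ap by (simp add: ln_mult algebra_simps)
      then show ?thesis using inner_opt[OF f True] pos unfolding b_def[symmetric] eln_def by simp
    next
      case False then have "p x = 0" using p_nn[of x] by simp
      then show ?thesis by (simp add: zero_ereal_def[symmetric])
    qed
  qed
  then have G: "G_obj \<alpha> p W (rs q) = ereal (\<alpha> / (\<alpha> - 1) * (\<Sum>x\<in>UNIV. p x * (b * ln (p x) + (1 - b) * ln (A q x))))"
    unfolding G_obj_def by simp
  have ab: "\<alpha> / (\<alpha> - 1) * b = 1" "\<alpha> / (\<alpha> - 1) * (1 - b) = 1 / (\<alpha> - 1)"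
    unfolding b_def using a0 a1 by (simp_all add: field_simps)
  have "\<alpha> / (\<alpha> - 1) * (\<Sum>x\<in>UNIV. p x * (b * ln (p x) + (1 - b) * ln (A q x)))
      = (\<Sum>x\<in>UNIV. (\<alpha> / (\<alpha> - 1) * b) * (p x * ln (p x)) + (\<alpha> / (\<alpha> - 1) * (1 - b)) * (p x * ln (A q x)))"
    unfolding sum_distrib_left
  proof (intro sum.cong refl)
    fix x
    have r: "\<And>a P L1 L2 :: real. a * (P * (b * L1 + (1 - b) * L2)) = (a * b) * (P * L1) + (a * (1 - b)) * (P * L2)"
      by (simp add: algebra_simps)
    show "\<alpha> / (\<alpha> - 1) * (p x * (b * ln (p x) + (1 - b) * ln (A q x))) =
      \<alpha> / (\<alpha> - 1) * b * (p x * ln (p x)) + \<alpha> / (\<alpha> - 1) * (1 - b) * (p x * ln (A q x))" by (rule r)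
  qed
  also have "\<dots> = (\<Sum>x\<in>UNIV. p x * ln (p x) + p x * ln (A q x) / (\<alpha> - 1))"
    by (intro sum.cong refl) (simp only: ab, simp)
  also have "\<dots> = (\<Sum>x\<in>UNIV. p x * ln (p x)) + phi q"
    unfolding phi_def by (simp add: sum.distrib sum_divide_distrib)
  finally have G2: "\<alpha> / (\<alpha> - 1) * (\<Sum>x\<in>UNIV. p x * (b * ln (p x) + (1 - b) * ln (A q x))) = (\<Sum>x\<in>UNIV. p x * ln (p x)) + phi q" .
  have H: "entropy p = - (\<Sum>x\<in>UNIV. p x * ln (p x))"
  proof -
    have "(\<Sum>z\<in>UNIV. if p z = 0 then 0 else p z * ln (p z)) = (\<Sum>x\<in>UNIV. p x * ln (p x))"
      by (intro sum.cong refl) simp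
    then show ?thesis unfolding entropy_def by simp
  qed
  show ?thesis unfolding G G2 H by simp
qed

end



lemma KL_cases: "(\<forall>z. P z \<noteq> 0 \<longrightarrow> Q z \<noteq> 0) \<or> KL P Q = \<infinity>"
  using KL_inf by blast

lemma KL_not_minf: "KL P Q \<noteq> -\<infinity>"
proof -
  have "\<forall>z\<in>UNIV. (if P z = 0 then 0 else if Q z = 0 then \<infinity> else ereal (P z * ln (P z / Q z))) \<noteq> -\<infinity>" by auto
  then show ?thesis unfolding KL_def by (induct rule: finite_induct[OF finite]) auto
qed

context ac begin

lemma term_id_lt1:
  assumes v: "v > 0" and w: "w > 0" and q: "qq > 0"
  shows "\<alpha> / (1 - \<alpha>) * ln (v / w) + ln (v / qq) = - (1 / (1 - \<alpha>)) * ln (w powr \<alpha> * qq powr (1 - \<alpha>) / v)"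
proof -
  have e: "ln (w powr \<alpha> * qq powr (1 - \<alpha>) / v) = \<alpha> * ln w + (1 - \<alpha>) * ln qq - ln v"
    using v w q by (simp add: ln_div ln_mult)
  have n: "1 - \<alpha> \<noteq> 0" using a1 by simp
  show ?thesis unfolding e using v w q n by (simp add: ln_div field_simps)
qed

lemma L1:
  assumes al: "\<alpha> < 1" and V: "is_channel V" and qd: "is_dist q"
  shows "f q \<le> F_C \<alpha> p W V q"
proof (cases "KL (joint p V) (joint p W) = \<infinity> \<or> KL (joint p V) (prodd p q) = \<infinity>")
  case True
  have c: "\<alpha> / (1 - \<alpha>) > 0" using al a0 by simp
  have "F_C \<alpha> p W V q = \<infinity>"
    using True c KL_not_minf unfolding F_C_def by auto
  then show ?thesis by simp
next
  case False
  then have c1: "\<forall>z. joint p V z \<noteq> 0 \<longrightarrow> joint p W z \<noteq> 0"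
    and c2: "\<forall>z. joint p V z \<noteq> 0 \<longrightarrow> prodd p q z \<noteq> 0" using KL_cases by blast+
  have Vn: "0 \<le> V x y" for x y using V unfolding is_channel_def is_dist_def by auto
  have Vs1: "(\<Sum>y\<in>UNIV. V x y) = 1" for x using V unfolding is_channel_def is_dist_def by auto
  have qn: "0 \<le> q y" for y using qd unfolding is_dist_def by auto
  have supp: "W x y > 0 \<and> q y > 0" if "p x > 0" "V x y > 0" for x y
  proof -
    have j: "joint p V (x, y) \<noteq> 0" unfolding joint_simp using that by simp
    have "joint p W (x, y) \<noteq> 0" "prodd p q (x, y) \<noteq> 0" using c1 c2 j by blast+
    then have "W x y \<noteq> 0" "q y \<noteq> 0" unfolding joint_simp prodd_simp by auto
    then show ?thesis using W_nn[of x y] qn[of y] by auto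
  qed
  have K1: "KL (joint p V) (joint p W) = ereal (\<Sum>x\<in>UNIV. \<Sum>y\<in>UNIV. if p x * V x y = 0 then 0 else p x * V x y * ln (V x y / W x y))"
    unfolding KL_fin[OF c1] sum_pairs joint_simp by (intro arg_cong[where f=ereal] sum.cong refl) auto
  have K2: "KL (joint p V) (prodd p q) = ereal (\<Sum>x\<in>UNIV. \<Sum>y\<in>UNIV. if p x * V x y = 0 then 0 else p x * V x y * ln (V x y / q y))"
    unfolding KL_fin[OF c2] sum_pairs joint_simp prodd_simp by (intro arg_cong[where f=ereal] sum.cong refl) auto
  have FC: "F_C \<alpha> p W V q = ereal (\<Sum>x\<in>UNIV. \<Sum>y\<in>UNIV. if p x * V x y = 0 then 0
       else p x * V x y * (\<alpha> / (1 - \<alpha>) * ln (V x y / W x y) + ln (V x y / q y)))"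
    unfolding F_C_def K1 K2 combine ..
  have Apos: "\<forall>x. p x > 0 \<longrightarrow> A q x > 0"
  proof (intro allI impI)
    fix x assume px: "p x > 0"
    obtain y where vy: "V x y > 0"
    proof (rule ccontr)
      assume "\<not> thesis"
      then have "\<forall>y. V x y = 0" using that Vn by (metis less_eq_real_def)
      then show False using Vs1[of x] by simp
    qed
    have s: "W x y > 0" "q y > 0" using supp[OF px vy] by auto
    have "W x y powr \<alpha> * q y powr (1 - \<alpha>) \<le> A q x"
      unfolding A_def using qn by (intro member_le_sum) auto
    moreover have "W x y powr \<alpha> * q y powr (1 - \<alpha>) > 0" using s by simp
    ultimately show "A q x > 0" by simp
  qed
  have True: "good q" unfolding good_def goodx_def using Apos qd al by simp
  show ?thesis
  proof -
    have "phi q \<le> (\<Sum>x\<in>UNIV. \<Sum>y\<in>UNIV. if p x * V x y = 0 then 0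
       else p x * V x y * (\<alpha> / (1 - \<alpha>) * ln (V x y / W x y) + ln (V x y / q y)))"
      unfolding phi_def sum_divide_distrib
    proof (intro sum_mono)
      fix x
      show "p x * ln (A q x) / (\<alpha> - 1) \<le> (\<Sum>y\<in>UNIV. if p x * V x y = 0 then 0
       else p x * V x y * (\<alpha> / (1 - \<alpha>) * ln (V x y / W x y) + ln (V x y / q y)))"
      proof (cases "p x > 0")
        case False then have "p x = 0" using p_nn[of x] by simp
        then show ?thesis by simp
      next
        case px: True
        define u where "u y = W x y powr \<alpha> * q y powr (1 - \<alpha>)" for y
        have g: "(\<Sum>y\<in>UNIV. if V x y = 0 then 0 else V x y * ln (u y / V x y)) \<le> ln (sum u UNIV)"
        proof (rule gibbs_ineq)
          show "\<forall>y\<in>UNIV. 0 < V x y \<longrightarrow> 0 < u y"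
          proof (intro ballI impI)
            fix y assume "0 < V x y"
            then have "W x y > 0" "q y > 0" using supp[OF px] by auto
            then show "0 < u y" unfolding u_def by simp
          qed
        qed (use Vn Vs1 in \<open>auto simp: u_def\<close>)
        have sA: "sum u UNIV = A q x" unfolding u_def A_def ..
        have "(\<Sum>y\<in>UNIV. if p x * V x y = 0 then 0
           else p x * V x y * (\<alpha> / (1 - \<alpha>) * ln (V x y / W x y) + ln (V x y / q y)))
           = p x * (- (1 / (1 - \<alpha>))) * (\<Sum>y\<in>UNIV. if V x y = 0 then 0 else V x y * ln (u y / V x y))"
          unfolding sum_distrib_left
        proof (intro sum.cong refl)
          fix y
          show "(if p x * V x y = 0 then 0 else p x * V x y * (\<alpha> / (1 - \<alpha>) * ln (V x y / W x y) + ln (V x y / q y))) =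
            p x * - (1 / (1 - \<alpha>)) * (if V x y = 0 then 0 else V x y * ln (u y / V x y))"
          proof (cases "V x y = 0")
            case True then show ?thesis by simp
          next
            case False
            then have vp: "V x y > 0" using Vn[of x y] by simp
            have "\<alpha> / (1 - \<alpha>) * ln (V x y / W x y) + ln (V x y / q y) = - (1 / (1 - \<alpha>)) * ln (u y / V x y)"
              unfolding u_def using term_id_lt1[OF vp] supp[OF px vp] by simp
            then show ?thesis using False px by simp
          qed
        qed
        moreover have "p x * (- (1 / (1 - \<alpha>))) * ln (A q x) \<le> p x * (- (1 / (1 - \<alpha>))) * (\<Sum>y\<in>UNIV. if V x y = 0 then 0 else V x y * ln (u y / V x y))"
          using g sA px al by (intro mult_left_mono_neg) (auto intro: mult_nonneg_nonneg)
        moreover have "p x * (- (1 / (1 - \<alpha>))) * ln (A q x) = p x * ln (A q x) / (\<alpha> - 1)"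
          using al by (simp add: field_simps)
        ultimately show ?thesis by simp
      qed
    qed
    then show ?thesis unfolding FC f_good[OF True] by simp
  qed
qed

end



lemma sum_Minf:
  fixes f :: "'c \<Rightarrow> ereal"
  assumes "finite S" "i \<in> S" "f i = -\<infinity>" "\<forall>j\<in>S. f j \<noteq> \<infinity>"
  shows "sum f S = -\<infinity>"
  using assms
proof (induct S rule: finite_induct)
  case empty then show ?case by simp
next
  case (insert x F)
  show ?case
  proof (cases "x = i")
    case True
    have "sum f F \<noteq> \<infinity>" using insert.prems(3) insert.hyps(1) by (simp add: sum_Pinfty)
    then show ?thesis using True insert by simp
  next
    case False
    then have "sum f F = -\<infinity>" using insert by auto
    moreover have "f x \<noteq> \<infinity>" using insert.prems by auto
    ultimately show ?thesis using insert by simp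
  qed
qed

context ac begin

lemma ent_eq: "entropy p = - (\<Sum>x\<in>UNIV. p x * ln (p x))"
proof -
  have "(\<Sum>z\<in>UNIV. if p z = 0 then 0 else p z * ln (p z)) = (\<Sum>x\<in>UNIV. p x * ln (p x))"
    by (intro sum.cong refl) simp
  then show ?thesis unfolding entropy_def by simp
qed

lemma inner_gt1: "\<alpha> > 1 \<Longrightarrow> inner_sum \<alpha> W r x = ereal (\<Sum>y\<in>UNIV. W x y * r y x powr (1 - 1 / \<alpha>))"
proof -
  assume ag: "\<alpha> > 1"
  have "inner_sum \<alpha> W r x = (\<Sum>y\<in>UNIV. ereal (W x y * r y x powr (1 - 1 / \<alpha>)))"
    unfolding inner_sum_def using ag by (intro sum.cong refl) auto
  then show ?thesis by simp
qed

lemma G_fin: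
  assumes "\<forall>x. p x > 0 \<longrightarrow> inner_sum \<alpha> W r x = ereal (B x) \<and> B x > 0"
  shows "G_obj \<alpha> p W r = ereal (\<alpha> / (\<alpha> - 1) * (\<Sum>x\<in>UNIV. p x * ln (B x)))"
proof -
  have "(\<Sum>x\<in>UNIV. ereal (p x) * eln (inner_sum \<alpha> W r x)) = (\<Sum>x\<in>UNIV. ereal (p x * ln (B x)))"
  proof (intro sum.cong refl)
    fix x show "ereal (p x) * eln (inner_sum \<alpha> W r x) = ereal (p x * ln (B x))"
    proof (cases "p x > 0")
      case True then show ?thesis using assms unfolding eln_def by auto
    next
      case False then have "p x = 0" using p_nn[of x] by simp
      then show ?thesis by (simp add: zero_ereal_def[symmetric])
    qed
  qed
  then show ?thesis unfolding G_obj_def by simp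
qed

lemma elr_not_inf: "exp_log_ratio pX V r \<noteq> \<infinity>"
  unfolding exp_log_ratio_def sum_Pinfty by auto

lemma term_id_gt1:
  assumes v: "v > 0" and w: "w > 0" and r: "rr > 0" and pp: "pp > 0"
  shows "\<alpha> / (1 - \<alpha>) * ln (v / w) + ln (rr / pp) = \<alpha> / (\<alpha> - 1) * ln (w * rr powr (1 - 1 / \<alpha>) * pp powr (- (1 - 1 / \<alpha>)) / v)"
proof -
  have e: "ln (w * rr powr (1 - 1 / \<alpha>) * pp powr (- (1 - 1 / \<alpha>)) / v) = ln w + (1 - 1 / \<alpha>) * ln rr - (1 - 1 / \<alpha>) * ln pp - ln v"
    using v w r pp by (simp add: ln_div ln_mult algebra_simps)
  have n: "\<alpha> - 1 \<noteq> 0" "1 - \<alpha> \<noteq> 0" "\<alpha> \<noteq> 0" using a1 a0 by auto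
  have k: "\<alpha> / (\<alpha> - 1) * (1 - 1 / \<alpha>) = 1" using n by (simp add: field_simps)
  have "\<alpha> / (\<alpha> - 1) * (ln w + (1 - 1 / \<alpha>) * ln rr - (1 - 1 / \<alpha>) * ln pp - ln v)
     = \<alpha> / (\<alpha> - 1) * (ln w - ln v) + (\<alpha> / (\<alpha> - 1) * (1 - 1 / \<alpha>)) * (ln rr - ln pp)"
  proof -
    have r: "\<And>c b a1 a2 a3 a4 :: real. c * (a1 + b * a2 - b * a3 - a4) = c * (a1 - a4) + (c * b) * (a2 - a3)"
      by (simp add: algebra_simps)
    show ?thesis by (rule r)
  qed
  also have "\<dots> = \<alpha> / (\<alpha> - 1) * (ln w - ln v) + (ln rr - ln pp)" unfolding k by simp
  also have "\<dots> = \<alpha> / (1 - \<alpha>) * ln (v / w) + ln (rr / pp)"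
    using v w r pp n by (simp add: ln_div field_simps)
  finally show ?thesis unfolding e by simp
qed

lemma L2:
  assumes ag: "\<alpha> > 1" and V: "is_channel V" and R: "is_channel r"
  shows "F_C_tilde \<alpha> p W V r \<le> ereal (entropy p) + G_obj \<alpha> p W r"
proof -
  have cneg: "\<alpha> / (1 - \<alpha>) < 0" using ag by (simp add: divide_pos_neg)
  have Vn: "0 \<le> V x y" for x y using V unfolding is_channel_def is_dist_def by auto
  have Vs1: "(\<Sum>y\<in>UNIV. V x y) = 1" for x using V unfolding is_channel_def is_dist_def by auto
  have rn: "0 \<le> r y x" for x y using R unfolding is_channel_def is_dist_def by auto
  show ?thesis
  proof (cases "KL (joint p V) (joint p W) = \<infinity>")
    case True
    then have "F_C_tilde \<alpha> p W V r = -\<infinity>" unfolding F_C_tilde_def using cneg elr_not_inf[of p V r]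
      by (cases "exp_log_ratio p V r") auto
    then show ?thesis by simp
  next
    case False
    then have c1: "\<forall>z. joint p V z \<noteq> 0 \<longrightarrow> joint p W z \<noteq> 0" using KL_cases by blast
    have K1: "KL (joint p V) (joint p W) = ereal (\<Sum>x\<in>UNIV. \<Sum>y\<in>UNIV. if p x * V x y = 0 then 0 else p x * V x y * ln (V x y / W x y))"
      unfolding KL_fin[OF c1] sum_pairs joint_simp by (intro arg_cong[where f=ereal] sum.cong refl) auto
    show ?thesis
    proof (cases "\<forall>x y. p x * V x y \<noteq> 0 \<longrightarrow> r y x \<noteq> 0")
      case False
      then obtain x y where xy: "p x * V x y \<noteq> 0" "r y x = 0" by auto
      have "exp_log_ratio p V r = -\<infinity>"
        unfolding exp_log_ratio_def
        by (rule sum_Minf[of _ "(x, y)"]) (use xy in auto)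
      then have "F_C_tilde \<alpha> p W V r = -\<infinity>" unfolding F_C_tilde_def K1 by simp
      then show ?thesis by simp
    next
      case c3: True
      have supp: "W x y > 0 \<and> r y x > 0" if "p x > 0" "V x y > 0" for x y
      proof -
        have j: "joint p V (x, y) \<noteq> 0" unfolding joint_simp using that by simp
        have "joint p W (x, y) \<noteq> 0" using c1 j by blast
        then have "W x y \<noteq> 0" unfolding joint_simp by auto
        moreover have "r y x \<noteq> 0" using c3 that by simp
        ultimately show ?thesis using W_nn[of x y] rn[of y x] by auto
      qed
      define B where "B x = (\<Sum>y\<in>UNIV. W x y * r y x powr (1 - 1 / \<alpha>))" for x
      have Bpos: "B x > 0" if px: "p x > 0" for x
      proof -
        obtain y where vy: "V x y > 0"
        proof (rule ccontr)
          assume "\<not> thesis"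
          then have "\<forall>y. V x y = 0" using that Vn by (metis less_eq_real_def)
          then show False using Vs1[of x] by simp
        qed
        have s: "W x y > 0" "r y x > 0" using supp[OF px vy] by auto
        have "W x y * r y x powr (1 - 1 / \<alpha>) \<le> B x"
          unfolding B_def using rn W_nn by (intro member_le_sum) auto
        moreover have "W x y * r y x powr (1 - 1 / \<alpha>) > 0" using s by simp
        ultimately show ?thesis by simp
      qed
      have G: "G_obj \<alpha> p W r = ereal (\<alpha> / (\<alpha> - 1) * (\<Sum>x\<in>UNIV. p x * ln (B x)))"
        by (rule G_fin) (use Bpos inner_gt1[OF ag] in \<open>auto simp: B_def\<close>)
      have Ft: "F_C_tilde \<alpha> p W V r = ereal (\<Sum>x\<in>UNIV. \<Sum>y\<in>UNIV. if p x * V x y = 0 then 0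
         else p x * V x y * (\<alpha> / (1 - \<alpha>) * ln (V x y / W x y) + ln (r y x / p x)))"
        unfolding F_C_tilde_def K1 elr_fin[OF c3] combine ..
      have "(\<Sum>x\<in>UNIV. \<Sum>y\<in>UNIV. if p x * V x y = 0 then 0
         else p x * V x y * (\<alpha> / (1 - \<alpha>) * ln (V x y / W x y) + ln (r y x / p x)))
         \<le> (\<Sum>x\<in>UNIV. p x * (\<alpha> / (\<alpha> - 1) * ln (B x) - ln (p x)))"
      proof (intro sum_mono)
        fix x
        show "(\<Sum>y\<in>UNIV. if p x * V x y = 0 then 0
         else p x * V x y * (\<alpha> / (1 - \<alpha>) * ln (V x y / W x y) + ln (r y x / p x)))
         \<le> p x * (\<alpha> / (\<alpha> - 1) * ln (B x) - ln (p x))"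
        proof (cases "p x > 0")
          case False then have "p x = 0" using p_nn[of x] by simp
          then show ?thesis by simp
        next
          case px: True
          define u where "u y = W x y * r y x powr (1 - 1 / \<alpha>) * p x powr (- (1 - 1 / \<alpha>))" for y
          have g: "(\<Sum>y\<in>UNIV. if V x y = 0 then 0 else V x y * ln (u y / V x y)) \<le> ln (sum u UNIV)"
          proof (rule gibbs_ineq)
            show "\<forall>y\<in>UNIV. 0 < V x y \<longrightarrow> 0 < u y"
            proof (intro ballI impI)
              fix y assume "0 < V x y"
              then have "W x y > 0" "r y x > 0" using supp[OF px] by auto
              then show "0 < u y" unfolding u_def using px by simp
            qed
          qed (use Vn Vs1 W_nn rn in \<open>auto simp: u_def\<close>)
          have sU: "sum u UNIV = p x powr (- (1 - 1 / \<alpha>)) * B x"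
            unfolding u_def B_def by (simp add: sum_distrib_left algebra_simps)
          have lnU: "ln (sum u UNIV) = ln (B x) - (1 - 1 / \<alpha>) * ln (p x)"
            unfolding sU using px Bpos[OF px] by (simp add: ln_mult algebra_simps)
          have eqs: "(\<Sum>y\<in>UNIV. if p x * V x y = 0 then 0
             else p x * V x y * (\<alpha> / (1 - \<alpha>) * ln (V x y / W x y) + ln (r y x / p x)))
             = p x * (\<alpha> / (\<alpha> - 1)) * (\<Sum>y\<in>UNIV. if V x y = 0 then 0 else V x y * ln (u y / V x y))"
            unfolding sum_distrib_left
          proof (intro sum.cong refl)
            fix y
            show "(if p x * V x y = 0 then 0 else p x * V x y * (\<alpha> / (1 - \<alpha>) * ln (V x y / W x y) + ln (r y x / p x))) =
              p x * (\<alpha> / (\<alpha> - 1)) * (if V x y = 0 then 0 else V x y * ln (u y / V x y))"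
            proof (cases "V x y = 0")
              case True then show ?thesis by simp
            next
              case False
              then have vp: "V x y > 0" using Vn[of x y] by simp
              have s: "W x y > 0" "r y x > 0" using supp[OF px vp] by auto
              have "\<alpha> / (1 - \<alpha>) * ln (V x y / W x y) + ln (r y x / p x) = \<alpha> / (\<alpha> - 1) * ln (u y / V x y)"
                unfolding u_def by (rule term_id_gt1[OF vp s px])
              then show ?thesis using False px by simp
            qed
          qed
          have cp: "p x * (\<alpha> / (\<alpha> - 1)) \<ge> 0" using px ag by simp
          have "p x * (\<alpha> / (\<alpha> - 1)) * (\<Sum>y\<in>UNIV. if V x y = 0 then 0 else V x y * ln (u y / V x y))
              \<le> p x * (\<alpha> / (\<alpha> - 1)) * (ln (B x) - (1 - 1 / \<alpha>) * ln (p x))"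
            using g lnU cp by (intro mult_left_mono) auto
          also have "\<dots> = p x * (\<alpha> / (\<alpha> - 1) * ln (B x) - ln (p x))"
            using ag by (simp add: field_simps)
          finally show ?thesis unfolding eqs .
        qed
      qed
      also have "(\<Sum>x\<in>UNIV. p x * (\<alpha> / (\<alpha> - 1) * ln (B x) - ln (p x))) = entropy p + \<alpha> / (\<alpha> - 1) * (\<Sum>x\<in>UNIV. p x * ln (B x))"
        unfolding ent_eq by (simp add: sum_subtractf sum_distrib_left algebra_simps)
      finally show ?thesis unfolding Ft G by simp
    qed
  qed
qed

end



context ac begin

lemma P1:
  assumes ag: "\<alpha> > 1" and w: "w \<ge> 0" and q: "qq \<ge> 0" and r: "rr \<ge> 0" and wq: "w > 0 \<longrightarrow> qq > 0"
  shows "(w powr \<alpha> * qq powr (1 - \<alpha>)) powr (1 / \<alpha>) * (qq * rr) powr (1 - 1 / \<alpha>) = w * rr powr (1 - 1 / \<alpha>)"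
proof (cases "w = 0")
  case True then show ?thesis by simp
next
  case False
  then have wp: "w > 0" and qp: "qq > 0" using w wq by auto
  show ?thesis
  proof (cases "rr = 0")
    case True then show ?thesis using ag by simp
  next
    case False
    then have rp: "rr > 0" using r by simp
    have l: "ln ((w powr \<alpha> * qq powr (1 - \<alpha>)) powr (1 / \<alpha>) * (qq * rr) powr (1 - 1 / \<alpha>))
        = (1 / \<alpha>) * (\<alpha> * ln w + (1 - \<alpha>) * ln qq) + (1 - 1 / \<alpha>) * (ln qq + ln rr)"
      using wp qp rp by (simp add: ln_mult)
    also have "\<dots> = ((1 / \<alpha>) * \<alpha>) * ln w + (1 - 1 / \<alpha>) * ln rr + ((1 / \<alpha>) * (1 - \<alpha>) + (1 - 1 / \<alpha>)) * ln qq"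
    proof -
      have r: "\<And>i a b c d e f :: real. i * (a * d + b * e) + c * (e + f) = (i * a) * d + c * f + (i * b + c) * e"
        by (simp add: algebra_simps)
      show ?thesis by (rule r)
    qed
    also have "(1 / \<alpha>) * \<alpha> = 1" using a0 by simp
    also have "(1 / \<alpha>) * (1 - \<alpha>) + (1 - 1 / \<alpha>) = 0" using a0 by (simp add: field_simps)
    also have "1 * ln w + (1 - 1 / \<alpha>) * ln rr + 0 * ln qq = ln (w * rr powr (1 - 1 / \<alpha>))"
      using wp rp by (simp add: ln_mult)
    finally show ?thesis using wp qp rp by (subst (asm) ln_inj_iff) auto
  qed
qed

lemma P2:
  assumes al: "\<alpha> < 1" and w: "w \<ge> 0" and q: "qq \<ge> 0" and r: "rr \<ge> 0" and wr: "w > 0 \<longrightarrow> rr > 0"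
  shows "(w * rr powr (1 - 1 / \<alpha>)) powr \<alpha> * (qq * rr) powr (1 - \<alpha>) = w powr \<alpha> * qq powr (1 - \<alpha>)"
proof (cases "w = 0")
  case True then show ?thesis by simp
next
  case False
  then have wp: "w > 0" and rp: "rr > 0" using w wr by auto
  show ?thesis
  proof (cases "qq = 0")
    case True then show ?thesis using al by simp
  next
    case False
    then have qp: "qq > 0" using q by simp
    have "ln ((w * rr powr (1 - 1 / \<alpha>)) powr \<alpha> * (qq * rr) powr (1 - \<alpha>))
        = \<alpha> * (ln w + (1 - 1 / \<alpha>) * ln rr) + (1 - \<alpha>) * (ln qq + ln rr)"
      using wp qp rp by (simp add: ln_mult)
    also have "\<dots> = \<alpha> * ln w + (1 - \<alpha>) * ln qq + (\<alpha> * (1 - 1 / \<alpha>) + (1 - \<alpha>)) * ln rr"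
      by (simp add: algebra_simps)
    also have "\<alpha> * (1 - 1 / \<alpha>) + (1 - \<alpha>) = 0" using a0 by (simp add: field_simps)
    also have "\<alpha> * ln w + (1 - \<alpha>) * ln qq + 0 * ln rr = ln (w powr \<alpha> * qq powr (1 - \<alpha>))"
      using wp qp by (simp add: ln_mult)
    finally show ?thesis using wp qp rp by (subst (asm) ln_inj_iff) auto
  qed
qed

end



context ac begin

lemma holder_x:
  assumes g: "good q" and R: "is_channel r" and px: "p x > 0"
    and Bp: "(\<Sum>y\<in>UNIV. W x y * r y x powr (1 - 1 / \<alpha>)) > 0"
    and rp: "\<alpha> < 1 \<longrightarrow> (\<forall>y. W x y > 0 \<longrightarrow> r y x > 0)"
  shows "(\<Sum>y\<in>UNIV. q y * r y x) > 0 \<and>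
    \<alpha> / (\<alpha> - 1) * ln (\<Sum>y\<in>UNIV. W x y * r y x powr (1 - 1 / \<alpha>)) \<le> ln (A q x) / (\<alpha> - 1) + ln (\<Sum>y\<in>UNIV. q y * r y x)"
proof -
  define B where "B = (\<Sum>y\<in>UNIV. W x y * r y x powr (1 - 1 / \<alpha>))"
  define C where "C = (\<Sum>y\<in>UNIV. q y * r y x)"
  have qd: "is_dist q" using g unfolding good_def by simp
  have qn: "0 \<le> q y" for y using qd unfolding is_dist_def by auto
  have rn: "0 \<le> r y x" for y using R unfolding is_channel_def is_dist_def by auto
  have Ap: "A q x > 0" using g px unfolding good_def goodx_def by simp
  have C0: "C \<ge> 0" unfolding C_def using qn rn by (intro sum_nonneg mult_nonneg_nonneg) auto
  have Bp': "B > 0" using Bp unfolding B_def .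
  show ?thesis
  proof (cases "\<alpha> > 1")
    case ag: True
    have h: "(\<Sum>y\<in>UNIV. (W x y powr \<alpha> * q y powr (1 - \<alpha>)) powr (1 / \<alpha>) * (q y * r y x) powr (1 - 1 / \<alpha>))
        \<le> (\<Sum>y\<in>UNIV. W x y powr \<alpha> * q y powr (1 - \<alpha>)) powr (1 / \<alpha>) * (\<Sum>y\<in>UNIV. q y * r y x) powr (1 - 1 / \<alpha>)"
      by (rule holder_ineq) (use ag qn rn in auto)
    have "(\<Sum>y\<in>UNIV. (W x y powr \<alpha> * q y powr (1 - \<alpha>)) powr (1 / \<alpha>) * (q y * r y x) powr (1 - 1 / \<alpha>)) = B"
      unfolding B_def
    proof (intro sum.cong refl)
      fix y
      have "W x y > 0 \<longrightarrow> q y > 0" using g px ag unfolding good_def goodx_def by auto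
      then show "(W x y powr \<alpha> * q y powr (1 - \<alpha>)) powr (1 / \<alpha>) * (q y * r y x) powr (1 - 1 / \<alpha>) = W x y * r y x powr (1 - 1 / \<alpha>)"
        by (rule P1[OF ag W_nn qn rn])
    qed
    then have hB: "B \<le> A q x powr (1 / \<alpha>) * C powr (1 - 1 / \<alpha>)" using h unfolding A_def C_def by simp
    have Cp: "C > 0"
    proof (rule ccontr)
      assume "\<not> C > 0" then have "C = 0" using C0 by simp
      then show False using hB Bp' by simp
    qed
    have "ln B \<le> ln (A q x powr (1 / \<alpha>) * C powr (1 - 1 / \<alpha>))" using hB Bp' by simp
    also have "\<dots> = (1 / \<alpha>) * ln (A q x) + (1 - 1 / \<alpha>) * ln C" using Ap Cp by (simp add: ln_mult)
    finally have l: "ln B \<le> (1 / \<alpha>) * ln (A q x) + (1 - 1 / \<alpha>) * ln C" .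
    have k: "\<alpha> / (\<alpha> - 1) > 0" using ag by simp
    have "\<alpha> / (\<alpha> - 1) * ln B \<le> \<alpha> / (\<alpha> - 1) * ((1 / \<alpha>) * ln (A q x) + (1 - 1 / \<alpha>) * ln C)"
      using l k by (intro mult_left_mono) auto
    also have "\<dots> = ln (A q x) / (\<alpha> - 1) + ln C" using ag by (simp add: field_simps)
    finally show ?thesis using Cp unfolding B_def C_def by simp
  next
    case False
    then have al: "\<alpha> < 1" using a1 by simp
    have h: "(\<Sum>y\<in>UNIV. (W x y * r y x powr (1 - 1 / \<alpha>)) powr \<alpha> * (q y * r y x) powr (1 - \<alpha>))
        \<le> (\<Sum>y\<in>UNIV. W x y * r y x powr (1 - 1 / \<alpha>)) powr \<alpha> * (\<Sum>y\<in>UNIV. q y * r y x) powr (1 - \<alpha>)"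
      by (rule holder_ineq) (use al a0 qn rn W_nn in auto)
    have "(\<Sum>y\<in>UNIV. (W x y * r y x powr (1 - 1 / \<alpha>)) powr \<alpha> * (q y * r y x) powr (1 - \<alpha>)) = A q x"
      unfolding A_def
    proof (intro sum.cong refl)
      fix y
      have "W x y > 0 \<longrightarrow> r y x > 0" using rp al by auto
      then show "(W x y * r y x powr (1 - 1 / \<alpha>)) powr \<alpha> * (q y * r y x) powr (1 - \<alpha>) = W x y powr \<alpha> * q y powr (1 - \<alpha>)"
        by (rule P2[OF al W_nn qn rn])
    qed
    then have hA: "A q x \<le> B powr \<alpha> * C powr (1 - \<alpha>)" using h unfolding B_def C_def by simp
    have Cp: "C > 0"
    proof (rule ccontr)
      assume "\<not> C > 0" then have "C = 0" using C0 by simp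
      then show False using hA Ap al by simp
    qed
    have "ln (A q x) \<le> ln (B powr \<alpha> * C powr (1 - \<alpha>))" using hA Ap by simp
    also have "\<dots> = \<alpha> * ln B + (1 - \<alpha>) * ln C" using Bp' Cp by (simp add: ln_mult)
    finally have l: "ln (A q x) \<le> \<alpha> * ln B + (1 - \<alpha>) * ln C" .
    have "(\<alpha> * ln B + (1 - \<alpha>) * ln C) / (\<alpha> - 1) \<le> ln (A q x) / (\<alpha> - 1)"
      using l al by (intro divide_right_mono_neg) auto
    moreover have "(\<alpha> * ln B + (1 - \<alpha>) * ln C) / (\<alpha> - 1) = \<alpha> / (\<alpha> - 1) * ln B - ln C"
      using al by (simp add: field_simps)
    ultimately show ?thesis using Cp unfolding B_def C_def by simp
  qed
qed

end



context ac begin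

lemma L3:
  assumes qd: "is_dist q" and R: "is_channel r"
  shows "ereal (entropy p) + G_obj \<alpha> p W r \<le> f q"
proof (cases "good q")
  case False then show ?thesis using f_bad[OF qd] by simp
next
  case g: True
  have qn: "0 \<le> q y" for y using qd unfolding is_dist_def by auto
  have rn: "0 \<le> r y x" for x y using R unfolding is_channel_def is_dist_def by auto
  have rs1: "(\<Sum>x\<in>UNIV. r y x) = 1" for y using R unfolding is_channel_def is_dist_def by auto
  define B where "B x = (\<Sum>y\<in>UNIV. W x y * r y x powr (1 - 1 / \<alpha>))" for x
  have B0: "B x \<ge> 0" for x unfolding B_def using W_nn rn by (intro sum_nonneg mult_nonneg_nonneg) auto
  have main: "ereal (entropy p) + G_obj \<alpha> p W r \<le> f q"
    if fin: "\<forall>x. p x > 0 \<longrightarrow> inner_sum \<alpha> W r x = ereal (B x) \<and> B x > 0 \<and> (\<alpha> < 1 \<longrightarrow> (\<forall>y. W x y > 0 \<longrightarrow> r y x > 0))"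
  proof -
    have G: "G_obj \<alpha> p W r = ereal (\<alpha> / (\<alpha> - 1) * (\<Sum>x\<in>UNIV. p x * ln (B x)))"
      by (rule G_fin) (use fin in auto)
    define C where "C x = (\<Sum>y\<in>UNIV. q y * r y x)" for x
    have C0: "C x \<ge> 0" for x unfolding C_def using qn rn by (intro sum_nonneg mult_nonneg_nonneg) auto
    have sC: "(\<Sum>x\<in>UNIV. C x) = 1"
      unfolding C_def using rs1 qd unfolding is_dist_def
      by (subst sum.swap) (simp add: sum_distrib_left[symmetric])
    have "(\<Sum>x\<in>UNIV. p x * (\<alpha> / (\<alpha> - 1) * ln (B x) - ln (p x))) \<le> (\<Sum>x\<in>UNIV. p x * ln (A q x) / (\<alpha> - 1) + C x - p x)"
    proof (intro sum_mono)
      fix x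
      show "p x * (\<alpha> / (\<alpha> - 1) * ln (B x) - ln (p x)) \<le> p x * ln (A q x) / (\<alpha> - 1) + C x - p x"
      proof (cases "p x > 0")
        case False then have "p x = 0" using p_nn[of x] by simp
        then show ?thesis using C0[of x] by simp
      next
        case px: True
        have hx: "C x > 0 \<and> \<alpha> / (\<alpha> - 1) * ln (B x) \<le> ln (A q x) / (\<alpha> - 1) + ln (C x)"
          unfolding B_def C_def by (rule holder_x[OF g R px]) (use fin px in \<open>auto simp: B_def\<close>)
        have "ln (C x / p x) \<le> C x / p x - 1" using hx px by (intro ln_le_minus_one) simp
        then have "p x * ln (C x / p x) \<le> p x * (C x / p x - 1)" using px by (intro mult_left_mono) auto
        also have "p x * (C x / p x - 1) = C x - p x" using px by (simp add: field_simps)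
        finally have l2: "p x * (ln (C x) - ln (p x)) \<le> C x - p x" using hx px by (simp add: ln_div)
        have "p x * (\<alpha> / (\<alpha> - 1) * ln (B x) - ln (p x)) \<le> p x * (ln (A q x) / (\<alpha> - 1) + ln (C x) - ln (p x))"
          using hx px by (intro mult_left_mono) auto
        also have "\<dots> = p x * ln (A q x) / (\<alpha> - 1) + p x * (ln (C x) - ln (p x))" by (simp add: algebra_simps)
        finally show ?thesis using l2 by simp
      qed
    qed
    also have "\<dots> = phi q" unfolding phi_def using sC p_sum
      by (simp add: sum.distrib sum_subtractf sum_divide_distrib)
    finally have r: "(\<Sum>x\<in>UNIV. p x * (\<alpha> / (\<alpha> - 1) * ln (B x) - ln (p x))) \<le> phi q" .
    have "entropy p + \<alpha> / (\<alpha> - 1) * (\<Sum>x\<in>UNIV. p x * ln (B x)) = (\<Sum>x\<in>UNIV. p x * (\<alpha> / (\<alpha> - 1) * ln (B x) - ln (p x)))"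
      unfolding ent_eq by (simp add: sum_subtractf sum_distrib_left algebra_simps)
    then show ?thesis unfolding G f_good[OF g] using r by simp
  qed
  show ?thesis
  proof (cases "\<alpha> > 1")
    case ag: True
    show ?thesis
    proof (cases "\<exists>x. p x > 0 \<and> B x = 0")
      case True
      then obtain x0 where x0: "p x0 > 0" "B x0 = 0" by auto
      have "(\<Sum>x\<in>UNIV. ereal (p x) * eln (inner_sum \<alpha> W r x)) = -\<infinity>"
      proof (rule sum_Minf[of _ x0])
        show "ereal (p x0) * eln (inner_sum \<alpha> W r x0) = -\<infinity>"
          unfolding inner_gt1[OF ag] B_def[symmetric] x0(2) eln_def using x0(1) by simp
        show "\<forall>j\<in>UNIV. ereal (p j) * eln (inner_sum \<alpha> W r j) \<noteq> \<infinity>"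
          unfolding inner_gt1[OF ag] eln_def using p_nn by (auto simp: not_less[symmetric])
      qed auto
      then have "G_obj \<alpha> p W r = -\<infinity>" unfolding G_obj_def using ag by simp
      then show ?thesis by simp
    next
      case False
      then have "\<forall>x. p x > 0 \<longrightarrow> inner_sum \<alpha> W r x = ereal (B x) \<and> B x > 0 \<and> (\<alpha> < 1 \<longrightarrow> (\<forall>y. W x y > 0 \<longrightarrow> r y x > 0))"
        using inner_gt1[OF ag] B0 ag unfolding B_def by (auto simp: less_eq_real_def)
      then show ?thesis by (rule main)
    qed
  next
    case False
    then have al: "\<alpha> < 1" using a1 by simp
    show ?thesis
    proof (cases "\<exists>x y. p x > 0 \<and> W x y > 0 \<and> r y x = 0")
      case True
      then obtain x0 y0 where xy: "p x0 > 0" "W x0 y0 > 0" "r y0 x0 = 0" by auto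
      have "inner_sum \<alpha> W r x0 = \<infinity>"
        unfolding inner_sum_def sum_Pinfty using xy al by (intro conjI bexI[of _ y0]) auto
      then have "(\<Sum>x\<in>UNIV. ereal (p x) * eln (inner_sum \<alpha> W r x)) = \<infinity>"
        unfolding sum_Pinfty eln_def using xy by (intro conjI bexI[of _ x0]) auto
      moreover have "\<alpha> / (\<alpha> - 1) < 0" using al a0 by (simp add: divide_pos_neg)
      ultimately have "G_obj \<alpha> p W r = -\<infinity>" unfolding G_obj_def using a0 a1 by simp
      then show ?thesis by simp
    next
      case False
      have "p x > 0 \<Longrightarrow> inner_sum \<alpha> W r x = ereal (B x) \<and> B x > 0 \<and> (\<forall>y. W x y > 0 \<longrightarrow> r y x > 0)" for x
      proof -
        assume px: "p x > 0"
        have pos: "W x y > 0 \<Longrightarrow> r y x > 0" for y using False px rn[of y x] by (auto simp: less_eq_real_def)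
        have "inner_sum \<alpha> W r x = (\<Sum>y\<in>UNIV. ereal (W x y * r y x powr (1 - 1 / \<alpha>)))"
          unfolding inner_sum_def
        proof (intro sum.cong refl)
          fix y show "(if W x y = 0 then 0 else if r y x = 0 then if \<alpha> < 1 then \<infinity> else 0
            else ereal (W x y * r y x powr (1 - 1 / \<alpha>))) = ereal (W x y * r y x powr (1 - 1 / \<alpha>))"
            using pos[of y] W_nn[of x y] by (cases "W x y = 0") auto
        qed
        then have e: "inner_sum \<alpha> W r x = ereal (B x)" unfolding B_def by simp
        obtain y where y: "W x y > 0" using W_ex by blast
        have "W x y * r y x powr (1 - 1 / \<alpha>) \<le> B x"
          unfolding B_def using rn W_nn by (intro member_le_sum) auto
        moreover have "W x y * r y x powr (1 - 1 / \<alpha>) > 0" using y pos[OF y] by simp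
        ultimately show ?thesis using e pos by simp
      qed
      then show ?thesis by (intro main) auto
    qed
  qed
qed

end




context ac begin

lemma final:
  shows "(\<alpha> < 1 \<longrightarrow>
            I_C \<alpha> p W = (INF V\<in>{V. is_channel V}. INF q\<in>{q. is_dist q}. F_C \<alpha> p W V q) \<and>
            (\<exists>V q. is_channel V \<and> is_dist q \<and> F_C \<alpha> p W V q = I_C \<alpha> p W))
       \<and> (\<alpha> > 1 \<longrightarrow>
            I_C \<alpha> p W = (SUP V\<in>{V. is_channel V}. SUP r\<in>{r. is_channel r}. F_C_tilde \<alpha> p W V r) \<and>
            (\<exists>V r. is_channel V \<and> is_channel r \<and> F_C_tilde \<alpha> p W V r = I_C \<alpha> p W))
       \<and> I_C \<alpha> p W = ereal (entropy p) + (SUP r\<in>{r. is_channel r}. G_obj \<alpha> p W r)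
       \<and> (\<exists>r. is_channel r \<and> I_C \<alpha> p W = ereal (entropy p) + G_obj \<alpha> p W r)"
proof -
  obtain q0 where g0: "good q0" and mn: "\<forall>q'. good q' \<longrightarrow> phi q0 \<le> phi q'"
  proof (cases "\<alpha> < 1")
    case True then show ?thesis using exists_min_lt1 that by blast
  next
    case False then have "\<alpha> > 1" using a1 by simp
    then show ?thesis using exists_min_gt1 that by blast
  qed
  have fp: "fpq q0" unfolding fpq_def using g0 fixed_point[OF g0 mn] by blast
  have q0d: "is_dist q0" using g0 unfolding good_def by simp
  have fle: "f q0 \<le> f q" if "is_dist q" for q
  proof (cases "good q")
    case True then show ?thesis using mn f_good g0 by simp
  next
    case False then show ?thesis using f_bad[OF that] by simp
  qed
  have IC: "I_C \<alpha> p W = ereal (phi q0)"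
  proof -
    have "I_C \<alpha> p W = (INF q\<in>{q. is_dist q}. f q)" unfolding I_C_def f_def ..
    also have "\<dots> = f q0"
    proof (rule antisym)
      show "(INF q\<in>{q. is_dist q}. f q) \<le> f q0" using q0d by (intro INF_lower) simp
      show "f q0 \<le> (INF q\<in>{q. is_dist q}. f q)" using fle by (intro INF_greatest) simp
    qed
    finally show ?thesis using f_good[OF g0] by simp
  qed
  have Vc: "is_channel (Vs q0)" by (rule Vs_channel[OF fp])
  have Rc: "is_channel (rs q0)" by (rule rs_channel[OF fp])
  have c1: "\<alpha> < 1 \<longrightarrow>
            I_C \<alpha> p W = (INF V\<in>{V. is_channel V}. INF q\<in>{q. is_dist q}. F_C \<alpha> p W V q) \<and>
            (\<exists>V q. is_channel V \<and> is_dist q \<and> F_C \<alpha> p W V q = I_C \<alpha> p W)"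
  proof
    assume al: "\<alpha> < 1"
    have "(INF V\<in>{V. is_channel V}. INF q\<in>{q. is_dist q}. F_C \<alpha> p W V q) = ereal (phi q0)"
    proof (rule antisym)
      have "(INF V\<in>{V. is_channel V}. INF q\<in>{q. is_dist q}. F_C \<alpha> p W V q) \<le> (INF q\<in>{q. is_dist q}. F_C \<alpha> p W (Vs q0) q)"
        using Vc by (intro INF_lower) simp
      also have "\<dots> \<le> F_C \<alpha> p W (Vs q0) q0" using q0d by (intro INF_lower) simp
      also have "\<dots> = ereal (phi q0)" by (rule FC_opt[OF fp])
      finally show "(INF V\<in>{V. is_channel V}. INF q\<in>{q. is_dist q}. F_C \<alpha> p W V q) \<le> ereal (phi q0)" .
      show "ereal (phi q0) \<le> (INF V\<in>{V. is_channel V}. INF q\<in>{q. is_dist q}. F_C \<alpha> p W V q)"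
      proof (intro INF_greatest)
        fix V :: "'a \<Rightarrow> 'b \<Rightarrow> real" and q :: "'b \<Rightarrow> real"
        assume "V \<in> {V. is_channel V}" "q \<in> {q. is_dist q}"
        then have "f q \<le> F_C \<alpha> p W V q" using L1[OF al] by simp
        moreover have "f q0 \<le> f q" using fle \<open>q \<in> {q. is_dist q}\<close> by simp
        ultimately show "ereal (phi q0) \<le> F_C \<alpha> p W V q" using f_good[OF g0] by simp
      qed
    qed
    then show "I_C \<alpha> p W = (INF V\<in>{V. is_channel V}. INF q\<in>{q. is_dist q}. F_C \<alpha> p W V q) \<and>
            (\<exists>V q. is_channel V \<and> is_dist q \<and> F_C \<alpha> p W V q = I_C \<alpha> p W)"
      using IC Vc q0d FC_opt[OF fp] by auto
  qed
  have c2: "\<alpha> > 1 \<longrightarrow>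
            I_C \<alpha> p W = (SUP V\<in>{V. is_channel V}. SUP r\<in>{r. is_channel r}. F_C_tilde \<alpha> p W V r) \<and>
            (\<exists>V r. is_channel V \<and> is_channel r \<and> F_C_tilde \<alpha> p W V r = I_C \<alpha> p W)"
  proof
    assume ag: "\<alpha> > 1"
    have "(SUP V\<in>{V. is_channel V}. SUP r\<in>{r. is_channel r}. F_C_tilde \<alpha> p W V r) = ereal (phi q0)"
    proof (rule antisym)
      show "(SUP V\<in>{V. is_channel V}. SUP r\<in>{r. is_channel r}. F_C_tilde \<alpha> p W V r) \<le> ereal (phi q0)"
      proof (intro SUP_least)
        fix V :: "'a \<Rightarrow> 'b \<Rightarrow> real" and r :: "'b \<Rightarrow> 'a \<Rightarrow> real"
        assume "V \<in> {V. is_channel V}" "r \<in> {r. is_channel r}"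
        then have "F_C_tilde \<alpha> p W V r \<le> ereal (entropy p) + G_obj \<alpha> p W r" using L2[OF ag] by simp
        also have "\<dots> \<le> f q0" using L3[OF q0d] \<open>r \<in> {r. is_channel r}\<close> by simp
        finally show "F_C_tilde \<alpha> p W V r \<le> ereal (phi q0)" using f_good[OF g0] by simp
      qed
      have "ereal (phi q0) = F_C_tilde \<alpha> p W (Vs q0) (rs q0)" by (rule FCt_opt[OF fp, symmetric])
      also have "\<dots> \<le> (SUP r\<in>{r. is_channel r}. F_C_tilde \<alpha> p W (Vs q0) r)" using Rc by (intro SUP_upper) simp
      also have "\<dots> \<le> (SUP V\<in>{V. is_channel V}. SUP r\<in>{r. is_channel r}. F_C_tilde \<alpha> p W V r)"
        using Vc by (intro SUP_upper) simp
      finally show "ereal (phi q0) \<le> (SUP V\<in>{V. is_channel V}. SUP r\<in>{r. is_channel r}. F_C_tilde \<alpha> p W V r)" .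
    qed
    then show "I_C \<alpha> p W = (SUP V\<in>{V. is_channel V}. SUP r\<in>{r. is_channel r}. F_C_tilde \<alpha> p W V r) \<and>
            (\<exists>V r. is_channel V \<and> is_channel r \<and> F_C_tilde \<alpha> p W V r = I_C \<alpha> p W)"
      using IC Vc Rc FCt_opt[OF fp] by auto
  qed
  have c3: "I_C \<alpha> p W = ereal (entropy p) + (SUP r\<in>{r. is_channel r}. G_obj \<alpha> p W r)"
  proof -
    have rin: "rs q0 \<in> {r. is_channel r}" using Rc by simp
    have ne: "{r :: 'b \<Rightarrow> 'a \<Rightarrow> real. is_channel r} \<noteq> {}"
    proof
      assume "{r :: 'b \<Rightarrow> 'a \<Rightarrow> real. is_channel r} = {}"
      then show False using rin by simp
    qed
    have "ereal (entropy p) + (SUP r\<in>{r. is_channel r}. G_obj \<alpha> p W r) = (SUP r\<in>{r. is_channel r}. ereal (entropy p) + G_obj \<alpha> p W r)"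
      by (rule SUP_ereal_add_right[symmetric, OF ne]) simp
    also have "\<dots> = ereal (phi q0)"
    proof (rule antisym)
      show "(SUP r\<in>{r. is_channel r}. ereal (entropy p) + G_obj \<alpha> p W r) \<le> ereal (phi q0)"
        using L3[OF q0d] f_good[OF g0] by (intro SUP_least) auto
      have "ereal (phi q0) = ereal (entropy p) + G_obj \<alpha> p W (rs q0)" by (rule G_opt[OF fp, symmetric])
      also have "\<dots> \<le> (SUP r\<in>{r. is_channel r}. ereal (entropy p) + G_obj \<alpha> p W r)" using Rc by (intro SUP_upper) simp
      finally show "ereal (phi q0) \<le> (SUP r\<in>{r. is_channel r}. ereal (entropy p) + G_obj \<alpha> p W r)" .
    qed
    finally show ?thesis using IC by simp
  qed
  have c4: "\<exists>r. is_channel r \<and> I_C \<alpha> p W = ereal (entropy p) + G_obj \<alpha> p W r"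
    using Rc IC G_opt[OF fp] by auto
  show ?thesis using c1 c2 c3 c4 by blast
qed

end

theorem theorem2:
  fixes \<alpha> :: real and pX :: "'a::finite \<Rightarrow> real" and W :: "'a \<Rightarrow> 'b::finite \<Rightarrow> real"
  assumes "0 < \<alpha>" and "\<alpha> \<noteq> 1"
    and "is_dist pX" and "is_channel W"
  shows "(\<alpha> < 1 \<longrightarrow>
            I_C \<alpha> pX W = (INF V\<in>{V. is_channel V}. INF q\<in>{q. is_dist q}. F_C \<alpha> pX W V q) \<and>
            (\<exists>V q. is_channel V \<and> is_dist q \<and> F_C \<alpha> pX W V q = I_C \<alpha> pX W))
       \<and> (\<alpha> > 1 \<longrightarrow>
            I_C \<alpha> pX W = (SUP V\<in>{V. is_channel V}. SUP r\<in>{r. is_channel r}. F_C_tilde \<alpha> pX W V r) \<and>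
            (\<exists>V r. is_channel V \<and> is_channel r \<and> F_C_tilde \<alpha> pX W V r = I_C \<alpha> pX W))
       \<and> I_C \<alpha> pX W = ereal (entropy pX) + (SUP r\<in>{r. is_channel r}. G_obj \<alpha> pX W r)
       \<and> (\<exists>r. is_channel r \<and> I_C \<alpha> pX W = ereal (entropy pX) + G_obj \<alpha> pX W r)"
proof -
  interpret ac \<alpha> pX W using assms by unfold_locales
  show ?thesis by (rule final)
qed


end
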